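(* With the notation of the context, let $\varepsilon>0$. For every $z\in U$ with $\mathrm{dist}(z,\Lambda_\varepsilon)>(2n/\lambda)^{1/2}\,\mathfrak r(\varepsilon)$ and every $r>0$ with $B_r(z)\Subset U$, \[\sup_{B_r(z)}w_\varepsilon\ge\frac{\lambda}{2n}r^2-\mathfrak r(\varepsilon)^2.\]
   Context: Let $U\subset\mathbb{R}^n$ be a smooth bounded domain, and let $\varphi_0\in C^2(U)\cap C(\overline U)$ be positive somewhere in $U$, negative on $\partial U$, and satisfy $\lambda\le-\Delta\varphi_0\le\lambda^{-1}$ in $U$ for some $\lambda\in(0,1]$. Let $\psi:\mathbb{R}^n\to\mathbb{R}$ be a smooth $\mathbb{Z}^n$-periodic function with $-1\le\psi\le0$, and let $p\in\mathbb{R}$. For $\varepsilon>0$ set $\varphi_\varepsilon(x)=\varphi_0(x)+\varepsilon^p\psi(x/\varepsilon)$ and let $u_\varepsilon$ be the least function $v$ with $\Delta v\le 0$ in $U$, $v\ge\varphi_\varepsilon$ in $U$, $v\ge0$ on $\partial U$. Set $w_\varepsilon=u_\varepsilon-\varphi_0$ and $\Lambda_\varepsilon=\{u_\varepsilon=\varphi_\varepsilon\}\cap U$. For $\mu>0$, let $\chi_\mu$ be the least $\mathbb{Z}^n$-periodic function $v$ on $\mathbb{R}^n$ with $\Delta v\le\mu$ in $\mathbb{R}^n$ and $v\ge\psi$ in $\mathbb{R}^n$, and $\mathcal E(\mu)=-\inf\chi_\mu$. Define $\mathfrak r(\varepsilon)=\big(\varepsilon^p\,\mathcal E(\lambda^{-1}\varepsilon^{2-p})\big)^{1/2}$.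 *)

theory Defs
  imports "HOL-Analysis.Analysis"
begin

fun iter_partial :: "'a::euclidean_space list \<Rightarrow> ('a \<Rightarrow> real) \<Rightarrow> 'a \<Rightarrow> real" where
  "iter_partial [] f = f"
| "iter_partial (b # bs) f = (\<lambda>x. frechet_derivative (iter_partial bs f) (at x) b)"

definition laplacian :: "('a::euclidean_space \<Rightarrow> real) \<Rightarrow> 'a \<Rightarrow> real" where
  "laplacian f x = (\<Sum>b\<in>Basis. iter_partial [b, b] f x)"

definition C2_on :: "'a::euclidean_space set \<Rightarrow> ('a \<Rightarrow> real) \<Rightarrow> bool" where
  "C2_on S f \<longleftrightarrow>
     (\<forall>x\<in>S. f differentiable (at x)) \<and>
     (\<forall>b\<in>Basis. \<forall>x\<in>S. iter_partial [b] f differentiable (at x)) \<and>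
     (\<forall>b\<in>Basis. \<forall>c\<in>Basis. continuous_on S (iter_partial [c, b] f))"

definition smooth :: "('a::euclidean_space \<Rightarrow> real) \<Rightarrow> bool" where
  "smooth f \<longleftrightarrow> (\<forall>bs. set bs \<subseteq> Basis \<longrightarrow> (\<forall>x. iter_partial bs f differentiable (at x)))"

definition smooth_bounded_domain :: "'a::euclidean_space set \<Rightarrow> bool" where
  "smooth_bounded_domain U \<longleftrightarrow>
     open U \<and> connected U \<and> bounded U \<and> U \<noteq> {} \<and>
     (\<forall>p\<in>frontier U. \<exists>r>0. \<exists>\<rho>. smooth \<rho> \<and>
        (\<forall>x\<in>ball p r. (\<exists>b\<in>Basis. frechet_derivative \<rho> (at x) b \<noteq> 0)) \<and>
        U \<inter> ball p r = {x\<in>ball p r. \<rho> x < 0})"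

definition lattice_periodic :: "('a::euclidean_space \<Rightarrow> real) \<Rightarrow> bool" where
  "lattice_periodic v \<longleftrightarrow>
     (\<forall>x k. (\<forall>b\<in>Basis. k \<bullet> b \<in> \<int>) \<longrightarrow> v (x + k) = v x)"

(* "\<Delta>v \<le> \<mu> in S" in the viscosity sense (v continuous): for every C^2 function
   touching v from below at x \<in> S, its Laplacian at x is \<le> \<mu> *)
definition visc_lap_le :: "'a::euclidean_space set \<Rightarrow> real \<Rightarrow> ('a \<Rightarrow> real) \<Rightarrow> bool" where
  "visc_lap_le S \<mu> v \<longleftrightarrow>
     (\<forall>x\<in>S. \<forall>\<phi> e. e > 0 \<longrightarrow> C2_on (ball x e) \<phi> \<longrightarrow> \<phi> x = v x \<longrightarrow>
        (\<forall>y\<in>ball x e. \<phi> y \<le> v y) \<longrightarrow> laplacian \<phi> x \<le> \<mu>)"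

definition obst_admissible :: "'a::euclidean_space set \<Rightarrow> ('a \<Rightarrow> real) \<Rightarrow> ('a \<Rightarrow> real) \<Rightarrow> bool" where
  "obst_admissible U obst v \<longleftrightarrow>
     continuous_on (closure U) v \<and> visc_lap_le U 0 v \<and>
     (\<forall>x\<in>U. v x \<ge> obst x) \<and> (\<forall>x\<in>frontier U. v x \<ge> 0)"

definition is_least_obst_sol :: "'a::euclidean_space set \<Rightarrow> ('a \<Rightarrow> real) \<Rightarrow> ('a \<Rightarrow> real) \<Rightarrow> bool" where
  "is_least_obst_sol U obst u \<longleftrightarrow>
     obst_admissible U obst u \<and>
     (\<forall>v. obst_admissible U obst v \<longrightarrow> (\<forall>x\<in>closure U. u x \<le> v x))"

definition cell_admissible :: "real \<Rightarrow> ('a::euclidean_space \<Rightarrow> real) \<Rightarrow> ('a \<Rightarrow> real) \<Rightarrow> bool" where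
  "cell_admissible \<mu> \<psi> v \<longleftrightarrow>
     continuous_on UNIV v \<and> lattice_periodic v \<and> visc_lap_le UNIV \<mu> v \<and> (\<forall>x. v x \<ge> \<psi> x)"

definition is_least_cell_sol :: "real \<Rightarrow> ('a::euclidean_space \<Rightarrow> real) \<Rightarrow> ('a \<Rightarrow> real) \<Rightarrow> bool" where
  "is_least_cell_sol \<mu> \<psi> chi \<longleftrightarrow>
     cell_admissible \<mu> \<psi> chi \<and> (\<forall>v. cell_admissible \<mu> \<psi> v \<longrightarrow> (\<forall>x. chi x \<le> v x))"

end

theory Submission
  imports Defs
begin


lemma ip1_eq: "(f has_derivative D) (at x) \<Longrightarrow> iter_partial [b] f x = D b"
  by (simp add: frechet_derivative_at[symmetric])

lemma ip1_transform:
  assumes "open S" "x \<in> S" "\<And>y. y \<in> S \<Longrightarrow> f y = g y" "f differentiable at x"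
  shows "iter_partial [b] f x = iter_partial [b] g x"
  using frechet_derivative_transform_within_open[OF assms(4,1,2)] assms(3) by simp

lemma affine_has_deriv:
  fixes f :: "'a::euclidean_space \<Rightarrow> real"
  assumes "f differentiable at (\<beta> *\<^sub>R x + t)"
  shows "((\<lambda>x. \<alpha> * f (\<beta> *\<^sub>R x + t)) has_derivative
           (\<lambda>h. \<alpha> * \<beta> * frechet_derivative f (at (\<beta> *\<^sub>R x + t)) h)) (at x)"
proof -
  have lin: "linear (frechet_derivative f (at (\<beta> *\<^sub>R x + t)))"
    using assms by (rule linear_frechet_derivative)
  have d1: "((\<lambda>x. \<beta> *\<^sub>R x + t) has_derivative (\<lambda>h. \<beta> *\<^sub>R h)) (at x)"
    by (auto intro!: derivative_eq_intros)
  have d2: "(f has_derivative frechet_derivative f (at (\<beta> *\<^sub>R x + t))) (at (\<beta> *\<^sub>R x + t))"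
    using assms frechet_derivative_works by blast
  have "((\<lambda>x. f (\<beta> *\<^sub>R x + t)) has_derivative (\<lambda>h. frechet_derivative f (at (\<beta> *\<^sub>R x + t)) (\<beta> *\<^sub>R h))) (at x)"
    using has_derivative_compose[OF d1 d2] by simp
  then have "((\<lambda>x. \<alpha> * f (\<beta> *\<^sub>R x + t)) has_derivative (\<lambda>h. \<alpha> * frechet_derivative f (at (\<beta> *\<^sub>R x + t)) (\<beta> *\<^sub>R h))) (at x)"
    by (rule has_derivative_mult_right)
  moreover have "\<And>h. \<alpha> * frechet_derivative f (at (\<beta> *\<^sub>R x + t)) (\<beta> *\<^sub>R h) = \<alpha> * \<beta> * frechet_derivative f (at (\<beta> *\<^sub>R x + t)) h"
    using linear_scale[OF lin] by simp
  ultimately show ?thesis by simp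
qed

lemma affine_ip1:
  fixes f :: "'a::euclidean_space \<Rightarrow> real"
  assumes "f differentiable at (\<beta> *\<^sub>R x + t)"
  shows "iter_partial [b] (\<lambda>x. \<alpha> * f (\<beta> *\<^sub>R x + t)) x = \<alpha> * \<beta> * iter_partial [b] f (\<beta> *\<^sub>R x + t)"
    and "(\<lambda>x. \<alpha> * f (\<beta> *\<^sub>R x + t)) differentiable at x"
  using ip1_eq[OF affine_has_deriv[OF assms]] affine_has_deriv[OF assms]
  by (auto simp: differentiable_def)



lemma ip2_transform:
  assumes "open S" "x \<in> S" "\<And>y. y \<in> S \<Longrightarrow> iter_partial [b] g y = h y" "h differentiable at x"
  shows "iter_partial [c, b] g x = frechet_derivative h (at x) c"
    and "iter_partial [b] g differentiable at x"
proof -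
  have "frechet_derivative h (at x) = frechet_derivative (iter_partial [b] g) (at x)"
    using frechet_derivative_transform_within_open[OF assms(4,1,2), of "iter_partial [b] g"] assms(3)
    by metis
  then show "iter_partial [c, b] g x = frechet_derivative h (at x) c" by simp
  show "iter_partial [b] g differentiable at x"
    using assms(4) has_derivative_transform_within_open[OF _ assms(1,2), of h _ "UNIV" "iter_partial [b] g"] assms(3)
    unfolding differentiable_def by (metis at_within_open[OF assms(2,1)] )
qed

lemma C2_affine:
  fixes f :: "'a::euclidean_space \<Rightarrow> real"
  assumes S: "open S" and f: "C2_on S f" and \<beta>: "\<beta> \<noteq> 0"
  shows "C2_on {x. \<beta> *\<^sub>R x + t \<in> S} (\<lambda>x. \<alpha> * f (\<beta> *\<^sub>R x + t))" (is ?A)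
    and "\<And>x b. x \<in> {x. \<beta> *\<^sub>R x + t \<in> S} \<Longrightarrow> b \<in> Basis \<Longrightarrow> iter_partial [b, b] (\<lambda>x. \<alpha> * f (\<beta> *\<^sub>R x + t)) x
          = \<alpha> * \<beta>\<^sup>2 * iter_partial [b, b] f (\<beta> *\<^sub>R x + t)" (is "\<And>x b. _ \<Longrightarrow> _ \<Longrightarrow> ?B x b")
proof -
  define T where "T = {x. \<beta> *\<^sub>R x + t \<in> S}"
  define g where "g = (\<lambda>x. \<alpha> * f (\<beta> *\<^sub>R x + t))"
  have T: "open T"
  proof -
    have "open ((\<lambda>x. \<beta> *\<^sub>R x + t) -` S)"
      by (rule continuous_open_vimage[OF S]) (auto intro!: continuous_intros)
    then show ?thesis unfolding T_def vimage_def by simp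
  qed
  have fd: "\<And>y. y \<in> S \<Longrightarrow> f differentiable at y" and pd: "\<And>b y. b \<in> Basis \<Longrightarrow> y \<in> S \<Longrightarrow> iter_partial [b] f differentiable at y"
    and pc: "\<And>b c. b \<in> Basis \<Longrightarrow> c \<in> Basis \<Longrightarrow> continuous_on S (iter_partial [c, b] f)"
    using f unfolding C2_on_def by auto
  have g1: "\<And>y b. y \<in> T \<Longrightarrow> iter_partial [b] g y = \<alpha> * \<beta> * iter_partial [b] f (\<beta> *\<^sub>R y + t)"
  proof -
    fix y b :: 'a assume "y \<in> T"
    then have y': "\<beta> *\<^sub>R y + t \<in> S" unfolding T_def by simp
    show "iter_partial [b] g y = \<alpha> * \<beta> * iter_partial [b] f (\<beta> *\<^sub>R y + t)"
      unfolding g_def by (rule affine_ip1(1)[OF fd[OF y']])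
  qed
  have gd: "\<And>y. y \<in> T \<Longrightarrow> g differentiable at y"
  proof -
    fix y assume "y \<in> T"
    then have y': "\<beta> *\<^sub>R y + t \<in> S" unfolding T_def by simp
    show "g differentiable at y"
      unfolding g_def by (rule affine_ip1(2)[OF fd[OF y']])
  qed
  have hd: "\<And>y b. b \<in> Basis \<Longrightarrow> y \<in> T \<Longrightarrow> (\<lambda>y. (\<alpha> * \<beta>) * iter_partial [b] f (\<beta> *\<^sub>R y + t)) differentiable at y"
  proof -
    fix y b :: 'a assume b: "b \<in> Basis" and "y \<in> T"
    then have y': "\<beta> *\<^sub>R y + t \<in> S" unfolding T_def by simp
    show "(\<lambda>y. (\<alpha> * \<beta>) * iter_partial [b] f (\<beta> *\<^sub>R y + t)) differentiable at y"
      by (rule affine_ip1(2)[OF pd[OF b y']])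
  qed
  have g2: "\<And>y b c. b \<in> Basis \<Longrightarrow> y \<in> T \<Longrightarrow> iter_partial [c, b] g y = \<alpha> * \<beta> * \<beta> * iter_partial [c, b] f (\<beta> *\<^sub>R y + t)"
  proof -
    fix y b c :: 'a assume b: "b \<in> Basis" and y: "y \<in> T"
    have "iter_partial [c, b] g y = frechet_derivative (\<lambda>y. (\<alpha> * \<beta>) * iter_partial [b] f (\<beta> *\<^sub>R y + t)) (at y) c"
      by (rule ip2_transform(1)[OF T y g1 hd[OF b y]])
    also have "\<dots> = iter_partial [c] (\<lambda>y. (\<alpha> * \<beta>) * iter_partial [b] f (\<beta> *\<^sub>R y + t)) y" by simp
    also have "\<dots> = \<alpha> * \<beta> * \<beta> * iter_partial [c] (iter_partial [b] f) (\<beta> *\<^sub>R y + t)"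
    proof -
      have y': "\<beta> *\<^sub>R y + t \<in> S" using y unfolding T_def by simp
      show ?thesis using affine_ip1(1)[OF pd[OF b y'], where \<alpha>="\<alpha> * \<beta>" and b=c] by simp
    qed
    finally show "iter_partial [c, b] g y = \<alpha> * \<beta> * \<beta> * iter_partial [c, b] f (\<beta> *\<^sub>R y + t)" by simp
  qed
  have g2d: "\<And>y b. b \<in> Basis \<Longrightarrow> y \<in> T \<Longrightarrow> iter_partial [b] g differentiable at y"
    using ip2_transform(2)[OF T _ g1 hd] by blast
  have "continuous_on T (iter_partial [c, b] g)" if b: "b \<in> Basis" and c: "c \<in> Basis" for b c :: 'a
  proof -
    have "continuous_on T (\<lambda>y. \<alpha> * \<beta> * \<beta> * iter_partial [c, b] f (\<beta> *\<^sub>R y + t))"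
      apply (intro continuous_intros)
      apply (rule continuous_on_compose2[OF pc[OF b c]])
      by (auto intro!: continuous_intros simp: T_def)
    then show ?thesis by (rule continuous_on_eq) (simp only: g2[OF b])
  qed
  then have "C2_on T g" using gd g2d unfolding C2_on_def by blast
  then show ?A unfolding T_def g_def .
  fix x b :: 'a assume "x \<in> {x. \<beta> *\<^sub>R x + t \<in> S}" "b \<in> Basis"
  then show "?B x b" using g2[of b x b] unfolding T_def g_def[symmetric] by (simp add: power2_eq_square)
qed

lemma laplacian_affine:
  fixes f :: "'a::euclidean_space \<Rightarrow> real"
  assumes "open S" "C2_on S f" "\<beta> \<noteq> 0" "\<beta> *\<^sub>R x + t \<in> S"
  shows "laplacian (\<lambda>x. \<alpha> * f (\<beta> *\<^sub>R x + t)) x = \<alpha> * \<beta>\<^sup>2 * laplacian f (\<beta> *\<^sub>R x + t)"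
  unfolding laplacian_def using C2_affine(2)[OF assms(1-3)] assms(4)
  by (simp add: sum_distrib_left)



lemma C2_add:
  fixes f g :: "'a::euclidean_space \<Rightarrow> real"
  assumes S: "open S" and f: "C2_on S f" and g: "C2_on S g"
  shows "C2_on S (\<lambda>x. f x + g x)"
    and "\<And>x b c. x \<in> S \<Longrightarrow> b \<in> Basis \<Longrightarrow> iter_partial [c, b] (\<lambda>x. f x + g x) x
          = iter_partial [c, b] f x + iter_partial [c, b] g x"
proof -
  define h where "h = (\<lambda>x. f x + g x)"
  have fd: "\<And>y. y \<in> S \<Longrightarrow> f differentiable at y" and pfd: "\<And>b y. b \<in> Basis \<Longrightarrow> y \<in> S \<Longrightarrow> iter_partial [b] f differentiable at y"
    and pfc: "\<And>b c. b \<in> Basis \<Longrightarrow> c \<in> Basis \<Longrightarrow> continuous_on S (iter_partial [c, b] f)"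
    using f unfolding C2_on_def by auto
  have gd: "\<And>y. y \<in> S \<Longrightarrow> g differentiable at y" and pgd: "\<And>b y. b \<in> Basis \<Longrightarrow> y \<in> S \<Longrightarrow> iter_partial [b] g differentiable at y"
    and pgc: "\<And>b c. b \<in> Basis \<Longrightarrow> c \<in> Basis \<Longrightarrow> continuous_on S (iter_partial [c, b] g)"
    using g unfolding C2_on_def by auto
  have hder: "(h has_derivative (\<lambda>v. frechet_derivative f (at y) v + frechet_derivative g (at y) v)) (at y)"
    if "y \<in> S" for y
    unfolding h_def
    using has_derivative_add[OF fd[OF that, unfolded frechet_derivative_works] gd[OF that, unfolded frechet_derivative_works]] .
  have hd: "\<And>y. y \<in> S \<Longrightarrow> h differentiable at y"
    using hder unfolding differentiable_def by blast
  have h1: "\<And>y b. y \<in> S \<Longrightarrow> iter_partial [b] h y = iter_partial [b] f y + iter_partial [b] g y"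
    using ip1_eq[OF hder] by simp
  have sd: "(\<lambda>y. iter_partial [b] f y + iter_partial [b] g y) differentiable at y"
    if "b \<in> Basis" "y \<in> S" for b y
    using pfd[OF that] pgd[OF that] by (rule differentiable_add)
  have h2: "iter_partial [c, b] h y = iter_partial [c, b] f y + iter_partial [c, b] g y"
    if b: "b \<in> Basis" and y: "y \<in> S" for b c y
  proof -
    have "iter_partial [c, b] h y = frechet_derivative (\<lambda>y. iter_partial [b] f y + iter_partial [b] g y) (at y) c"
      by (rule ip2_transform(1)[OF S y h1 sd[OF b y]])
    also have "\<dots> = iter_partial [c, b] f y + iter_partial [c, b] g y"
      using ip1_eq[OF has_derivative_add[OF pfd[OF b y, unfolded frechet_derivative_works] pgd[OF b y, unfolded frechet_derivative_works]]]
      by simp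
    finally show ?thesis .
  qed
  have h2d: "\<And>y b. b \<in> Basis \<Longrightarrow> y \<in> S \<Longrightarrow> iter_partial [b] h differentiable at y"
    using ip2_transform(2)[OF S _ h1 sd] by blast
  have "continuous_on S (iter_partial [c, b] h)" if b: "b \<in> Basis" and c: "c \<in> Basis" for b c :: 'a
  proof -
    have "continuous_on S (\<lambda>y. iter_partial [c, b] f y + iter_partial [c, b] g y)"
      by (intro continuous_on_add pfc[OF b c] pgc[OF b c])
    then show ?thesis by (rule continuous_on_eq) (simp only: h2[OF b])
  qed
  then have "C2_on S h" using hd h2d unfolding C2_on_def by blast
  then show "C2_on S (\<lambda>x. f x + g x)" unfolding h_def .
  fix x b c :: 'a assume "x \<in> S" "b \<in> Basis"
  then show "iter_partial [c, b] (\<lambda>x. f x + g x) x = iter_partial [c, b] f x + iter_partial [c, b] g x"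
    using h2 unfolding h_def by blast
qed

lemma laplacian_add:
  fixes f g :: "'a::euclidean_space \<Rightarrow> real"
  assumes "open S" "C2_on S f" "C2_on S g" "x \<in> S"
  shows "laplacian (\<lambda>x. f x + g x) x = laplacian f x + laplacian g x"
  unfolding laplacian_def using C2_add(2)[OF assms(1-3) assms(4)]
  by (simp add: sum.distrib)

lemma ip_const1: "iter_partial [b] (\<lambda>x::'a::euclidean_space. K::real) = (\<lambda>x. 0)"
  by (rule ext) simp

lemma C2_const: "C2_on S (\<lambda>x::'a::euclidean_space. K::real)"
  and laplacian_const: "laplacian (\<lambda>x::'a::euclidean_space. K::real) x = 0"
  unfolding C2_on_def laplacian_def by (simp_all add: ip_const1)

lemma quad_has_deriv:
  fixes z :: "'a::euclidean_space"
  shows "((\<lambda>x. a * ((x - z) \<bullet> (x - z))) has_derivative (\<lambda>h. 2 * a * ((x - z) \<bullet> h))) (at x)"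
proof -
  have "((\<lambda>x. a * ((x - z) \<bullet> (x - z))) has_derivative (\<lambda>h. a * (h \<bullet> (x - z) + (x - z) \<bullet> h))) (at x)"
    by (auto intro!: derivative_eq_intros)
  then show ?thesis by (simp add: inner_commute algebra_simps)
qed

lemma quad_ip1: "iter_partial [b] (\<lambda>x. a * ((x - z) \<bullet> (x - z))) = (\<lambda>x::'a::euclidean_space. 2 * a * ((x - z) \<bullet> b))"
  by (rule ext) (rule ip1_eq[OF quad_has_deriv])

lemma lin_has_deriv:
  fixes z :: "'a::euclidean_space"
  shows "((\<lambda>x. 2 * a * ((x - z) \<bullet> b)) has_derivative (\<lambda>h. 2 * a * (h \<bullet> b))) (at x)"
  by (auto intro!: derivative_eq_intros)

lemma quad_ip2: "iter_partial [c, b] (\<lambda>x. a * ((x - z) \<bullet> (x - z))) x = 2 * a * (c \<bullet> b)"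
  for z :: "'a::euclidean_space"
proof -
  have "iter_partial [c, b] (\<lambda>x. a * ((x - z) \<bullet> (x - z))) x = iter_partial [c] (\<lambda>x. 2 * a * ((x - z) \<bullet> b)) x"
    by (simp only: iter_partial.simps quad_ip1[of b a z, simplified])
  also have "\<dots> = 2 * a * (c \<bullet> b)" by (rule ip1_eq[OF lin_has_deriv])
  finally show ?thesis .
qed

lemma C2_quad: "C2_on S (\<lambda>x. a * ((x - z) \<bullet> (x - z)))"
  and laplacian_quad: "laplacian (\<lambda>x. a * ((x - z) \<bullet> (x - z))) x = 2 * a * real DIM('a)"
  for z :: "'a::euclidean_space"
proof -
  show "C2_on S (\<lambda>x. a * ((x - z) \<bullet> (x - z)))"
  proof -
    have d0: "(\<lambda>x. a * ((x - z) \<bullet> (x - z))) differentiable at x" for x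
      using quad_has_deriv unfolding differentiable_def by blast
    have d1: "iter_partial [b] (\<lambda>x. a * ((x - z) \<bullet> (x - z))) differentiable at x" for b x
      unfolding quad_ip1 using lin_has_deriv unfolding differentiable_def by blast
    have c2: "iter_partial [c, b] (\<lambda>x. a * ((x - z) \<bullet> (x - z))) = (\<lambda>x. 2 * a * (c \<bullet> b))" for b c
      by (rule ext) (rule quad_ip2)
    show ?thesis unfolding C2_on_def c2 using d0 d1 by simp
  qed
  show "laplacian (\<lambda>x. a * ((x - z) \<bullet> (x - z))) x = 2 * a * real DIM('a)"
    unfolding laplacian_def quad_ip2 by simp
qed



lemma oned_cmp:
  fixes F G F' G' :: "real \<Rightarrow> real"
  assumes e: "e > 0"
    and dF: "\<And>t. \<bar>t\<bar> < e \<Longrightarrow> (F has_real_derivative F' t) (at t)"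
    and dG: "\<And>t. \<bar>t\<bar> < e \<Longrightarrow> (G has_real_derivative G' t) (at t)"
    and dF2: "(F' has_real_derivative F2) (at 0)"
    and dG2: "(G' has_real_derivative G2) (at 0)"
    and le: "\<And>t. \<bar>t\<bar> < e \<Longrightarrow> F t \<le> G t" and eq: "F 0 = G 0"
  shows "F2 \<le> G2"
proof (rule ccontr)
  assume "\<not> F2 \<le> G2"
  then have neg: "G2 - F2 < 0" by simp
  define H where "H t = G t - F t" for t
  define H' where "H' t = G' t - F' t" for t
  have dH: "\<And>t. \<bar>t\<bar> < e \<Longrightarrow> (H has_real_derivative H' t) (at t)"
    unfolding H_def[abs_def] H'_def using dF dG by (auto intro!: derivative_eq_intros)
  have H0: "H 0 = 0" using eq unfolding H_def by simp
  have Hge: "\<And>t. \<bar>t\<bar> < e \<Longrightarrow> H t \<ge> 0" using le unfolding H_def by fastforce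
  have "H' 0 = 0"
    by (rule DERIV_local_min[OF dH[of 0] e]) (use e H0 Hge in auto)
  have dH2: "(H' has_real_derivative (G2 - F2)) (at 0)"
    unfolding H'_def[abs_def] using dF2 dG2 by (auto intro!: derivative_eq_intros)
  obtain d where d: "d > 0" "\<And>h. h > 0 \<Longrightarrow> h < d \<Longrightarrow> H' (0 + h) < H' 0"
    using DERIV_neg_dec_right[OF dH2 neg] by blast
  define h where "h = min d e / 2"
  have h: "h > 0" "h < d" "h < e" using d e unfolding h_def by auto
  obtain zz where zz: "0 < zz" "zz < h" "H h - H 0 = (h - 0) * H' zz"
    using MVT2[OF h(1), of H H'] dH h by force
  have "H' zz < 0" using d(2)[of zz] zz h \<open>H' 0 = 0\<close> by simp
  then have "H h < 0" using zz H0 h by (simp add: mult_pos_neg)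
  moreover have "H h \<ge> 0" using Hge h by simp
  ultimately show False by simp
qed

lemma line_deriv:
  fixes f :: "'a::euclidean_space \<Rightarrow> real"
  assumes "f differentiable at (x + t *\<^sub>R b)"
  shows "((\<lambda>s. f (x + s *\<^sub>R b)) has_real_derivative (frechet_derivative f (at (x + t *\<^sub>R b)) b)) (at t)"
proof -
  let ?D = "frechet_derivative f (at (x + t *\<^sub>R b))"
  have lin: "linear ?D" using assms by (rule linear_frechet_derivative)
  have d1: "((\<lambda>s. x + s *\<^sub>R b) has_derivative (\<lambda>s. s *\<^sub>R b)) (at t)"
    by (auto intro!: derivative_eq_intros)
  have d2: "(f has_derivative ?D) (at (x + t *\<^sub>R b))"
    using assms frechet_derivative_works by blast
  have "((\<lambda>s. f (x + s *\<^sub>R b)) has_derivative (\<lambda>s. ?D (s *\<^sub>R b))) (at t)"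
    using has_derivative_compose[OF d1 d2] by simp
  moreover have "(\<lambda>s. ?D (s *\<^sub>R b)) = (*) (?D b)"
    using linear_scale[OF lin] by (auto simp: mult.commute)
  ultimately show ?thesis unfolding has_field_derivative_def by simp
qed

lemma second_cmp:
  fixes f g :: "'a::euclidean_space \<Rightarrow> real"
  assumes e: "e > 0" and f: "C2_on (ball x e) f" and g: "C2_on (ball x e) g"
    and le: "\<forall>y\<in>ball x e. f y \<le> g y" and eq: "f x = g x" and b: "b \<in> Basis"
  shows "iter_partial [b, b] f x \<le> iter_partial [b, b] g x"
proof -
  have inb: "x + t *\<^sub>R b \<in> ball x e" if "\<bar>t\<bar> < e" for t
    using that b by (simp add: dist_norm)
  have x: "x \<in> ball x e" using e by simp
  show ?thesis
  proof (rule oned_cmp[OF e, where F="\<lambda>s. f (x + s *\<^sub>R b)" and G="\<lambda>s. g (x + s *\<^sub>R b)"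
        and F'="\<lambda>s. iter_partial [b] f (x + s *\<^sub>R b)" and G'="\<lambda>s. iter_partial [b] g (x + s *\<^sub>R b)"])
    fix t :: real assume t: "\<bar>t\<bar> < e"
    show "((\<lambda>s. f (x + s *\<^sub>R b)) has_real_derivative iter_partial [b] f (x + t *\<^sub>R b)) (at t)"
      using line_deriv[of f x t b] f inb[OF t] unfolding C2_on_def by simp
    show "((\<lambda>s. g (x + s *\<^sub>R b)) has_real_derivative iter_partial [b] g (x + t *\<^sub>R b)) (at t)"
      using line_deriv[of g x t b] g inb[OF t] unfolding C2_on_def by simp
    show "f (x + t *\<^sub>R b) \<le> g (x + t *\<^sub>R b)" using le inb[OF t] by blast
  next
    show "((\<lambda>s. iter_partial [b] f (x + s *\<^sub>R b)) has_real_derivative iter_partial [b, b] f x) (at 0)"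
      using line_deriv[of "iter_partial [b] f" x 0 b] f x b unfolding C2_on_def by simp
    show "((\<lambda>s. iter_partial [b] g (x + s *\<^sub>R b)) has_real_derivative iter_partial [b, b] g x) (at 0)"
      using line_deriv[of "iter_partial [b] g" x 0 b] g x b unfolding C2_on_def by simp
    show "f (x + 0 *\<^sub>R b) = g (x + 0 *\<^sub>R b)" using eq by simp
  qed
qed

lemma laplacian_cmp:
  fixes f g :: "'a::euclidean_space \<Rightarrow> real"
  assumes "e > 0" "C2_on (ball x e) f" "C2_on (ball x e) g"
    "\<forall>y\<in>ball x e. f y \<le> g y" "f x = g x"
  shows "laplacian f x \<le> laplacian g x"
  unfolding laplacian_def by (rule sum_mono) (rule second_cmp[OF assms])

lemma C2_on_subset: "C2_on S f \<Longrightarrow> T \<subseteq> S \<Longrightarrow> C2_on T f"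
  unfolding C2_on_def by (meson continuous_on_subset subsetD)



lemma inner_self_dist: "(y - x) \<bullet> (y - x) = (dist y x)\<^sup>2" for x y :: "'a::euclidean_space"
  by (simp add: dist_norm power2_norm_eq_inner)

lemma bump_contra:
  fixes U :: "'a::euclidean_space set" and u obst \<Phi> :: "'a \<Rightarrow> real"
  assumes U: "open U" and least: "is_least_obst_sol U obst u"
    and obst_c: "continuous_on U obst"
    and x2: "x2 \<in> U" and strict: "u x2 > obst x2"
    and \<Phi>: "C2_on U \<Phi>" and \<kappa>: "\<kappa> > 0" and lap\<Phi>: "\<forall>y\<in>U. laplacian \<Phi> y \<le> - \<kappa>"
    and r0: "r0 > 0" "ball x2 r0 \<subseteq> U" and above: "\<forall>y\<in>ball x2 r0. u y \<le> \<Phi> y" and touch: "\<Phi> x2 = u x2"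
  shows False
proof -
  define n where "n = real DIM('a)"
  have n: "n \<ge> 1" unfolding n_def by simp
  have adm: "obst_admissible U obst u" and lst: "\<And>v. obst_admissible U obst v \<Longrightarrow> \<forall>x\<in>closure U. u x \<le> v x"
    using least unfolding is_least_obst_sol_def by auto
  have uc: "continuous_on (closure U) u" and uvisc: "visc_lap_le U 0 u" and uob: "\<forall>x\<in>U. obst x \<le> u x"
    and ufr: "\<forall>x\<in>frontier U. 0 \<le> u x"
    using adm unfolding obst_admissible_def by auto
  have ucU: "continuous_on U u" using uc closure_subset continuous_on_subset by blast
  define m where "m = (u x2 - obst x2) / 2"
  have m: "m > 0" using strict unfolding m_def by simp
  have "continuous (at x2) (\<lambda>y. u y - obst y)"
    using continuous_on_diff[OF ucU obst_c] continuous_on_eq_continuous_at[OF U] x2 by blast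
  then obtain \<rho>0 where \<rho>0: "\<rho>0 > 0" "\<And>y. dist y x2 < \<rho>0 \<Longrightarrow> dist (u y - obst y) (u x2 - obst x2) < m"
    unfolding continuous_at_eps_delta using m by blast
  have gap: "\<And>y. dist y x2 < \<rho>0 \<Longrightarrow> u y - obst y > m"
  proof -
    fix y assume "dist y x2 < \<rho>0"
    then have "\<bar>(u y - obst y) - (u x2 - obst x2)\<bar> < m" using \<rho>0(2) by (simp add: dist_real_def)
    then show "u y - obst y > m" unfolding m_def abs_less_iff by auto
  qed
  define \<rho> where "\<rho> = min \<rho>0 r0 / 2"
  have \<rho>: "\<rho> > 0" "\<rho> < \<rho>0" "\<rho> < r0" using \<rho>0 r0 unfolding \<rho>_def by auto
  define c where "c = \<kappa> / (4 * n)"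
  have c: "c > 0" using \<kappa> n unfolding c_def by simp
  define \<delta> where "\<delta> = min m (c * \<rho>\<^sup>2) / 2"
  have cr: "c * \<rho>\<^sup>2 > 0" using c \<rho> by simp
  have \<delta>: "\<delta> > 0" "\<delta> < m" "\<delta> < c * \<rho>\<^sup>2" using m cr unfolding \<delta>_def by auto
  define q where "q = (\<lambda>y. c * ((y - x2) \<bullet> (y - x2)) + (- \<delta>))"
  define \<phi> where "\<phi> = (\<lambda>y. \<Phi> y + q y)"
  have qC2: "C2_on U q" unfolding q_def by (rule C2_add(1)[OF U C2_quad C2_const])
  have \<phi>C2: "C2_on U \<phi>" unfolding \<phi>_def by (rule C2_add(1)[OF U \<Phi> qC2])
  have lapq: "laplacian q y = 2 * c * n" if "y \<in> U" for y
  proof -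
    have "laplacian q y = laplacian (\<lambda>y. c * ((y - x2) \<bullet> (y - x2))) y + laplacian (\<lambda>y. - \<delta>) y"
      unfolding q_def by (rule laplacian_add[OF U C2_quad C2_const that])
    then show ?thesis unfolding n_def by (simp only: laplacian_quad laplacian_const)
  qed
  have lap\<phi>: "laplacian \<phi> y < 0" if "y \<in> U" for y
  proof -
    have "laplacian \<phi> y = laplacian \<Phi> y + 2 * c * n"
      unfolding \<phi>_def using laplacian_add[OF U \<Phi> qC2 that] lapq[OF that] by simp
    also have "2 * c * n = \<kappa> / 2" unfolding c_def using n by simp
    finally show ?thesis using lap\<Phi> that \<kappa> by auto
  qed
  have \<phi>x2: "\<phi> x2 = u x2 - \<delta>" unfolding \<phi>_def q_def using touch by simp
  have \<phi>ge: "\<phi> y \<ge> u y - \<delta>" if "y \<in> ball x2 r0" for y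
  proof -
    have "c * ((y - x2) \<bullet> (y - x2)) \<ge> 0" using c by simp
    then show ?thesis unfolding \<phi>_def q_def using above that by force
  qed
  have \<phi>gt: "\<phi> y > u y" if "y \<in> ball x2 r0" "c * (dist y x2)\<^sup>2 > \<delta>" for y
    unfolding \<phi>_def q_def inner_self_dist using above that by force
  define v where "v = (\<lambda>y. if y \<in> ball x2 \<rho> then min (u y) (\<phi> y) else u y)"
  have vle: "\<And>y. v y \<le> u y" unfolding v_def by auto
  have ball_sub: "ball x2 \<rho> \<subseteq> ball x2 r0" using \<rho> by auto
  have ball_subU: "ball x2 \<rho> \<subseteq> U" using ball_sub r0 by blast
  define s0 where "s0 = sqrt (\<delta> / c)"
  have s0: "s0 \<ge> 0" "s0 < \<rho>" "s0\<^sup>2 = \<delta> / c"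
  proof -
    show "s0 \<ge> 0" unfolding s0_def using \<delta> c by simp
    show "s0\<^sup>2 = \<delta> / c" unfolding s0_def using \<delta> c by simp
    have "\<delta> / c < \<rho>\<^sup>2" using \<delta> c by (simp add: divide_less_eq mult.commute)
    then have "sqrt (\<delta> / c) < sqrt (\<rho>\<^sup>2)" by (rule real_sqrt_less_mono)
    then show "s0 < \<rho>" unfolding s0_def using \<rho> by simp
  qed
  have veq: "v y = u y" if "dist y x2 > s0" for y
  proof (cases "y \<in> ball x2 \<rho>")
    case True
    have "s0\<^sup>2 < (dist y x2)\<^sup>2" using that s0(1) by (simp add: power_strict_mono)
    then have "\<delta> / c < (dist y x2)\<^sup>2" using s0 by simp
    then have "c * (dist y x2)\<^sup>2 > \<delta>" using c by (simp add: divide_less_eq mult.commute)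
    then have "\<phi> y > u y" using \<phi>gt True ball_sub by blast
    then show ?thesis unfolding v_def using True by simp
  next
    case False
    then show ?thesis unfolding v_def by simp
  qed
  have vcont: "continuous_on (closure U) v"
    unfolding continuous_on_eq_continuous_within
  proof
    fix x assume x: "x \<in> closure U"
    show "continuous (at x within closure U) v"
    proof (cases "x \<in> ball x2 \<rho>")
      case True
      have xU: "x \<in> U" using True ball_subU by blast
      have "continuous (at x) \<phi>"
        using \<phi>C2 xU unfolding C2_on_def by (meson differentiable_imp_continuous_within)
      then have c1: "continuous (at x within closure U) (\<lambda>y. min (u y) (\<phi> y))"
        using uc x continuous_on_eq_continuous_within continuous_within_subset
        by (metis continuous_min subset_UNIV)
      show ?thesis
      proof (rule continuous_transform_within[OF c1, of "\<rho> - dist x2 x"])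
        show "0 < \<rho> - dist x2 x" using True by simp
        show "x \<in> closure U" by (rule x)
        fix y assume "y \<in> closure U" "dist y x < \<rho> - dist x2 x"
        then have "y \<in> ball x2 \<rho>" by (metis dist_commute dist_triangle_lt mem_ball add.commute less_diff_eq)
        then show "min (u y) (\<phi> y) = v y" unfolding v_def by simp
      qed
    next
      case False
      have c1: "continuous (at x within closure U) u" using uc x continuous_on_eq_continuous_within by blast
      show ?thesis
      proof (rule continuous_transform_within[OF c1, of "dist x2 x - s0"])
        show "0 < dist x2 x - s0" using False s0 by simp
        show "x \<in> closure U" by (rule x)
        fix y assume "y \<in> closure U" "dist y x < dist x2 x - s0"
        then have "dist y x2 > s0" by (smt (verit) dist_commute dist_triangle)
        then show "u y = v y" using veq by simp
      qed
    qed
  qed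
  have vvisc: "visc_lap_le U 0 v"
    unfolding visc_lap_le_def
  proof (intro ballI allI impI)
    fix x \<psi>t e assume xU: "x \<in> U" and e: "e > 0" and C2t: "C2_on (ball x e) \<psi>t" and eqx: "\<psi>t x = v x"
      and below: "\<forall>y\<in>ball x e. \<psi>t y \<le> v y"
    show "laplacian \<psi>t x \<le> 0"
    proof (cases "v x = u x")
      case True
      have "\<forall>y\<in>ball x e. \<psi>t y \<le> u y" using below vle order_trans by blast
      then show ?thesis using uvisc xU e C2t eqx True unfolding visc_lap_le_def by metis
    next
      case False
      then have xb: "x \<in> ball x2 \<rho>" and vx: "v x = \<phi> x" unfolding v_def by (auto split: if_splits simp: min_def)
      define e' where "e' = min e (\<rho> - dist x2 x)"
      have e': "e' > 0" using e xb unfolding e'_def by simp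
      have sub1: "ball x e' \<subseteq> ball x e" unfolding e'_def by auto
      have sub2: "ball x e' \<subseteq> ball x2 \<rho>" unfolding e'_def
        by (auto simp: dist_commute) (metis dist_commute dist_triangle_lt add.commute less_diff_eq)
      have "laplacian \<psi>t x \<le> laplacian \<phi> x"
      proof (rule laplacian_cmp[OF e'])
        show "C2_on (ball x e') \<psi>t" using C2t sub1 by (rule C2_on_subset)
        show "C2_on (ball x e') \<phi>" using \<phi>C2 sub2 ball_subU by (meson C2_on_subset order_trans)
        show "\<forall>y\<in>ball x e'. \<psi>t y \<le> \<phi> y"
        proof
          fix y assume y: "y \<in> ball x e'"
          have "\<psi>t y \<le> v y" using below sub1 y by blast
          also have "v y \<le> \<phi> y" using sub2 y unfolding v_def by auto
          finally show "\<psi>t y \<le> \<phi> y" .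
        qed
        show "\<psi>t x = \<phi> x" using eqx vx by simp
      qed
      then show ?thesis using lap\<phi>[OF xU] by simp
    qed
  qed
  have vob: "\<forall>x\<in>U. obst x \<le> v x"
  proof
    fix x assume xU: "x \<in> U"
    show "obst x \<le> v x"
    proof (cases "x \<in> ball x2 \<rho>")
      case True
      have "dist x x2 < \<rho>0" using True \<rho> by (simp add: dist_commute)
      then have "u x - obst x > m" by (rule gap)
      moreover have "\<phi> x \<ge> u x - \<delta>" using \<phi>ge True ball_sub by blast
      ultimately show ?thesis unfolding v_def using True \<delta> uob xU by auto
    next
      case False
      then show ?thesis unfolding v_def using uob xU by simp
    qed
  qed
  have vfr: "\<forall>x\<in>frontier U. 0 \<le> v x"
  proof
    fix x assume "x \<in> frontier U"
    then have "x \<notin> U" using U by (simp add: frontier_def interior_open)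
    then have "x \<notin> ball x2 \<rho>" using ball_subU by blast
    then show "0 \<le> v x" unfolding v_def using ufr \<open>x \<in> frontier U\<close> by simp
  qed
  have "obst_admissible U obst v" unfolding obst_admissible_def using vcont vvisc vob vfr by blast
  then have "u x2 \<le> v x2" using lst x2 closure_subset by blast
  moreover have "v x2 \<le> \<phi> x2" unfolding v_def using \<rho> by simp
  ultimately show False using \<phi>x2 \<delta> by simp
qed



lemma C2_imp_cont: "C2_on U f \<Longrightarrow> open U \<Longrightarrow> continuous_on U f"
  unfolding C2_on_def
  by (meson continuous_at_imp_continuous_on differentiable_imp_continuous_within)

lemma main_step:
  fixes U :: "'a::euclidean_space set" and u obst \<phi>0 :: "'a \<Rightarrow> real"
  assumes U: "open U" and least: "is_least_obst_sol U obst u"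
    and obst_c: "continuous_on U obst"
    and \<phi>0: "C2_on U \<phi>0" and lam: "lam > 0" and lap: "\<forall>y\<in>U. laplacian \<phi>0 y \<le> - lam"
    and obst_le: "\<forall>x\<in>U. obst x \<le> \<phi>0 x"
    and lower: "\<forall>x\<in>U. u x - \<phi>0 x \<ge> - R2" and R2: "R2 \<ge> 0"
    and dst: "{x\<in>U. u x = obst x} = {} \<or> lam / (2 * real DIM('a)) * (infdist z {x\<in>U. u x = obst x})\<^sup>2 > R2"
    and z: "z \<in> U" and r: "r > 0" "cball z r \<subseteq> U"
  shows "Sup ((\<lambda>x. u x - \<phi>0 x) ` ball z r) \<ge> lam / (2 * real DIM('a)) * r\<^sup>2 - R2"
proof (rule ccontr)
  define n where "n = real DIM('a)"
  have n: "n \<ge> 1" unfolding n_def by simp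
  define L where "L = lam / (2 * n)"
  have L: "L > 0" unfolding L_def using lam n by simp
  define w where "w = (\<lambda>x. u x - \<phi>0 x)"
  define S where "S = Sup (w ` ball z r)"
  assume "\<not> ?thesis"
  then have Slt: "S < L * r\<^sup>2 - R2" unfolding S_def w_def L_def n_def by simp
  have adm: "obst_admissible U obst u"
    using least unfolding is_least_obst_sol_def by auto
  have uc: "continuous_on (closure U) u" and uob: "\<forall>x\<in>U. obst x \<le> u x"
    using adm unfolding obst_admissible_def by auto
  have cbU: "cball z r \<subseteq> closure U" using r closure_subset by blast
  have \<phi>0c: "continuous_on U \<phi>0" using C2_imp_cont[OF \<phi>0 U] .
  have wc: "continuous_on (cball z r) w" unfolding w_def
    by (intro continuous_on_diff continuous_on_subset[OF uc cbU] continuous_on_subset[OF \<phi>0c r(2)])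
  have "bounded (w ` cball z r)" by (rule compact_imp_bounded[OF compact_continuous_image[OF wc compact_cball]])
  then have "bdd_above (w ` ball z r)"
    by (meson ball_subset_cball bdd_above_mono bounded_imp_bdd_above image_mono)
  then have wleSb: "\<And>x. x \<in> ball z r \<Longrightarrow> w x \<le> S" unfolding S_def by (simp add: cSup_upper)
  have wleS: "\<And>x. x \<in> cball z r \<Longrightarrow> w x \<le> S"
  proof -
    fix x assume x: "x \<in> cball z r"
    show "w x \<le> S"
      by (rule continuous_le_on_closure[of "ball z r" w x S]) (use wc x r wleSb in auto)
  qed
  define g1 where "g1 = L * r\<^sup>2 - R2 - S"
  have g1: "g1 > 0" using Slt unfolding g1_def by simp
  define \<Lambda> where "\<Lambda> = {x\<in>U. u x = obst x}"
  define D where "D = infdist z \<Lambda>"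
  have D0: "D \<ge> 0" unfolding D_def by (rule infdist_nonneg)
  have dst': "\<Lambda> = {} \<or> L * D\<^sup>2 > R2" using dst unfolding \<Lambda>_def D_def L_def n_def by simp
  define g2 where "g2 = (if \<Lambda> = {} then 1 else (L * D\<^sup>2 - R2) / D\<^sup>2)"
  have DD: "\<Lambda> \<noteq> {} \<Longrightarrow> D\<^sup>2 > 0"
  proof -
    assume "\<Lambda> \<noteq> {}"
    then have "L * D\<^sup>2 > 0" using dst' R2 by auto
    then show "D\<^sup>2 > 0" using L by (simp add: zero_less_mult_iff)
  qed
  have g2: "g2 > 0"
  proof (cases "\<Lambda> = {}")
    case False
    then have "L * D\<^sup>2 - R2 > 0" "D\<^sup>2 > 0" using DD dst' by auto
    then show ?thesis unfolding g2_def using False by simp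
  qed (simp add: g2_def)
  have rr: "r\<^sup>2 > 0" using r by simp
  define \<eta> where "\<eta> = min L (min (g1 / r\<^sup>2) g2) / 2"
  have \<eta>: "\<eta> > 0" "\<eta> < L" "\<eta> < g1 / r\<^sup>2" "\<eta> < g2"
  proof -
    define G where "G = g1 / r\<^sup>2"
    have G: "G > 0" using g1 rr unfolding G_def by simp
    have m1: "min L (min G g2) \<le> L" "min L (min G g2) \<le> G" "min L (min G g2) \<le> g2" "min L (min G g2) > 0"
      using G L g2 by auto
    have e: "\<eta> = min L (min G g2) / 2" unfolding \<eta>_def G_def ..
    show "\<eta> > 0" "\<eta> < L" "\<eta> < g1 / r\<^sup>2" "\<eta> < g2"
      unfolding e G_def[symmetric] using m1 by linarith+
  qed
  have \<eta>r: "\<eta> * r\<^sup>2 < g1" using \<eta>(3) rr by (simp add: less_divide_eq)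
  have \<eta>D: "\<Lambda> \<noteq> {} \<Longrightarrow> \<eta> * D\<^sup>2 < L * D\<^sup>2 - R2"
  proof -
    assume ne: "\<Lambda> \<noteq> {}"
    then have "\<eta> < (L * D\<^sup>2 - R2) / D\<^sup>2" using \<eta>(4) unfolding g2_def by simp
    then show ?thesis using DD[OF ne] by (simp add: less_divide_eq)
  qed
  define a where "a = L - \<eta>"
  have a: "a > 0" using \<eta> unfolding a_def by simp
  define F where "F = (\<lambda>x. w x - a * ((x - z) \<bullet> (x - z)))"
  have Fc: "continuous_on (cball z r) F" unfolding F_def
    by (intro continuous_intros wc)
  obtain x2 where x2: "x2 \<in> cball z r" and x2max: "\<And>y. y \<in> cball z r \<Longrightarrow> F y \<le> F x2"
    using continuous_attains_sup[OF compact_cball _ Fc] r by force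
  have zc: "z \<in> cball z r" using r by simp
  have Fz: "F z \<ge> - R2" unfolding F_def w_def using lower z by simp
  have Fx2: "F x2 \<ge> - R2" using x2max[OF zc] Fz by simp
  have x2b: "x2 \<in> ball z r"
  proof (rule ccontr)
    assume "x2 \<notin> ball z r"
    then have "dist z x2 = r" using x2 by simp
    then have "(x2 - z) \<bullet> (x2 - z) = r\<^sup>2" by (simp add: inner_self_dist dist_commute)
    then have "F x2 = w x2 - a * r\<^sup>2" unfolding F_def by simp
    also have "\<dots> \<le> S - a * r\<^sup>2" using wleS[OF x2] by simp
    also have "\<dots> = S - L * r\<^sup>2 + \<eta> * r\<^sup>2" unfolding a_def by (simp add: algebra_simps)
    also have "\<dots> < - R2" using \<eta>r unfolding g1_def by simp
    finally show False using Fx2 by simp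
  qed
  have x2U: "x2 \<in> U" using x2 r by blast
  have strict: "u x2 > obst x2"
  proof (rule ccontr)
    assume "\<not> u x2 > obst x2"
    then have eq: "u x2 = obst x2" using uob x2U by force
    then have inL: "x2 \<in> \<Lambda>" unfolding \<Lambda>_def using x2U by simp
    then have ne: "\<Lambda> \<noteq> {}" by blast
    have "D \<le> dist z x2" unfolding D_def by (rule infdist_le[OF inL])
    then have "D\<^sup>2 \<le> (dist z x2)\<^sup>2" using D0 by (simp add: power_mono)
    then have "a * D\<^sup>2 \<le> a * ((x2 - z) \<bullet> (x2 - z))"
      using a by (simp add: inner_self_dist dist_commute)
    moreover have "w x2 \<le> 0" unfolding w_def using eq obst_le x2U by force
    ultimately have "F x2 \<le> - (a * D\<^sup>2)" unfolding F_def by simp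
    also have "- (a * D\<^sup>2) < - R2" using \<eta>D[OF ne] unfolding a_def by (simp add: algebra_simps)
    finally show False using Fx2 by simp
  qed
  define \<Phi> where "\<Phi> = (\<lambda>y. \<phi>0 y + (a * ((y - z) \<bullet> (y - z)) + F x2))"
  have qC2: "C2_on U (\<lambda>y. a * ((y - z) \<bullet> (y - z)) + F x2)" by (rule C2_add(1)[OF U C2_quad C2_const])
  have \<Phi>C2: "C2_on U \<Phi>" unfolding \<Phi>_def by (rule C2_add(1)[OF U \<phi>0 qC2])
  have lap\<Phi>: "\<forall>y\<in>U. laplacian \<Phi> y \<le> - (2 * n * \<eta>)"
  proof
    fix y assume y: "y \<in> U"
    have lq: "laplacian (\<lambda>y. a * ((y - z) \<bullet> (y - z)) + F x2) y = laplacian (\<lambda>y. a * ((y - z) \<bullet> (y - z))) y + laplacian (\<lambda>y. F x2) y"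
      by (rule laplacian_add[OF U C2_quad C2_const y])
    have "laplacian \<Phi> y = laplacian \<phi>0 y + laplacian (\<lambda>y. a * ((y - z) \<bullet> (y - z)) + F x2) y"
      unfolding \<Phi>_def by (rule laplacian_add[OF U \<phi>0 qC2 y])
    also have "\<dots> = laplacian \<phi>0 y + 2 * a * n" unfolding lq n_def by (simp only: laplacian_quad laplacian_const)
    also have "2 * a * n = lam - 2 * n * \<eta>" unfolding a_def L_def using n by (simp add: algebra_simps)
    finally show "laplacian \<Phi> y \<le> - (2 * n * \<eta>)" using lap y by force
  qed
  define r0 where "r0 = r - dist z x2"
  have r0: "r0 > 0" using x2b unfolding r0_def by simp
  have bsub: "ball x2 r0 \<subseteq> cball z r" unfolding r0_def
    by (auto simp: subset_iff) (metis dist_triangle add.commute less_diff_eq order.strict_implies_order order_le_less_trans)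
  have bsubU: "ball x2 r0 \<subseteq> U" using bsub r by blast
  have above: "\<forall>y\<in>ball x2 r0. u y \<le> \<Phi> y"
  proof
    fix y assume "y \<in> ball x2 r0"
    then have "F y \<le> F x2" using x2max bsub by blast
    then show "u y \<le> \<Phi> y" unfolding F_def w_def \<Phi>_def by simp
  qed
  have touch: "\<Phi> x2 = u x2" unfolding \<Phi>_def F_def w_def by simp
  have \<kappa>: "2 * n * \<eta> > 0" using n \<eta> by simp
  show False
    by (rule bump_contra[OF U least obst_c x2U strict \<Phi>C2 \<kappa> lap\<Phi> r0 bsubU above touch])
qed



definition Lat :: "'a::euclidean_space set" where
  "Lat = {k. \<forall>b\<in>Basis. k \<bullet> b \<in> \<int>}"

lemma Lat_0: "0 \<in> Lat" unfolding Lat_def by simp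
lemma Lat_add: "k \<in> Lat \<Longrightarrow> k' \<in> Lat \<Longrightarrow> k + k' \<in> Lat"
  unfolding Lat_def by (simp add: inner_add_left Ints_add)
lemma Lat_diff: "k \<in> Lat \<Longrightarrow> k' \<in> Lat \<Longrightarrow> k - k' \<in> Lat"
  unfolding Lat_def by (simp add: inner_diff_left Ints_diff)
lemma Lat_minus: "k \<in> Lat \<Longrightarrow> - k \<in> Lat"
  using Lat_diff[OF Lat_0] by simp

lemma periodic_Lat: "lattice_periodic v \<Longrightarrow> k \<in> Lat \<Longrightarrow> v (x + k) = v x"
  unfolding lattice_periodic_def Lat_def by blast

lemma Lat_image_shift:
  assumes "k' \<in> Lat"
  shows "(\<lambda>k. f (y + k' + k)) ` Lat = (\<lambda>k. f (y + k)) ` Lat"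
proof
  show "(\<lambda>k. f (y + k' + k)) ` Lat \<subseteq> (\<lambda>k. f (y + k)) ` Lat"
  proof
    fix t assume "t \<in> (\<lambda>k. f (y + k' + k)) ` Lat"
    then obtain k where k: "k \<in> Lat" "t = f (y + k' + k)" by blast
    then have "t = f (y + (k' + k))" by (simp add: add.assoc)
    then show "t \<in> (\<lambda>k. f (y + k)) ` Lat" using Lat_add[OF assms k(1)] by blast
  qed
  show "(\<lambda>k. f (y + k)) ` Lat \<subseteq> (\<lambda>k. f (y + k' + k)) ` Lat"
  proof
    fix t assume "t \<in> (\<lambda>k. f (y + k)) ` Lat"
    then obtain k where k: "k \<in> Lat" "t = f (y + k)" by blast
    then have "t = f (y + k' + (k - k'))" by (simp add: algebra_simps)
    then show "t \<in> (\<lambda>k. f (y + k' + k)) ` Lat" using Lat_diff[OF k(1) assms] by blast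
  qed
qed

lemma Lat_bounded_finite: "finite {k::'a::euclidean_space. k \<in> Lat \<and> norm k \<le> R}"
proof -
  define N where "N = \<lceil>R\<rceil>"
  define F where "F = (\<lambda>f. \<Sum>b\<in>(Basis::'a set). of_int (f b) *\<^sub>R b)"
  have "{k::'a. k \<in> Lat \<and> norm k \<le> R} \<subseteq> F ` (PiE Basis (\<lambda>_. {-N..N}))"
  proof
    fix k :: 'a assume k: "k \<in> {k. k \<in> Lat \<and> norm k \<le> R}"
    define f where "f = restrict (\<lambda>b. \<lfloor>k \<bullet> b\<rfloor>) Basis"
    have fb: "of_int (f b) = k \<bullet> b" if "b \<in> Basis" for b
    proof -
      have "k \<bullet> b \<in> \<int>" using k that unfolding Lat_def by blast
      then show ?thesis unfolding f_def using that by (auto elim!: Ints_cases)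
    qed
    have "f \<in> PiE Basis (\<lambda>_. {-N..N})"
    proof (rule PiE_I)
      fix b :: 'a assume b: "b \<in> Basis"
      have "\<bar>k \<bullet> b\<bar> \<le> R" using Basis_le_norm[OF b, of k] k by simp
      then have "\<bar>real_of_int (f b)\<bar> \<le> R" using fb[OF b] by simp
      then have "\<bar>f b\<bar> \<le> N" unfolding N_def by linarith
      then show "f b \<in> {-N..N}" by (simp add: abs_le_iff)
    next
      fix b :: 'a assume "b \<notin> Basis" then show "f b = undefined" unfolding f_def by simp
    qed
    moreover have "F f = k"
    proof -
      have "F f = (\<Sum>b\<in>Basis. (k \<bullet> b) *\<^sub>R b)" unfolding F_def by (rule sum.cong) (simp_all add: fb)
      also have "\<dots> = k" by (rule euclidean_representation)
      finally show ?thesis .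
    qed
    ultimately show "k \<in> F ` (PiE Basis (\<lambda>_. {-N..N}))" by blast
  qed
  moreover have "finite (F ` (PiE Basis (\<lambda>_. {-N..N})))" by (intro finite_imageI finite_PiE) auto
  ultimately show ?thesis by (rule finite_subset)
qed

lemma continuous_Min_image:
  assumes "finite K" "K \<noteq> {}" "\<And>k. k \<in> K \<Longrightarrow> continuous (at x) (f k)"
  shows "continuous (at x) (\<lambda>y. Min ((\<lambda>k. f k y :: real) ` K))"
  using assms
proof (induction K rule: finite_ne_induct)
  case (singleton a)
  then show ?case by simp
next
  case (insert a A)
  have eq: "(\<lambda>y. Min ((\<lambda>k. f k y) ` insert a A)) = (\<lambda>y. min (f a y) (Min ((\<lambda>k. f k y) ` A)))"
    using insert.hyps by (auto intro!: ext simp: Min_insert)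
  show ?case unfolding eq using insert by (intro continuous_min) auto
qed



lemma V_props:
  fixes U :: "'a::euclidean_space set" and u \<phi>0 \<psi> chi :: "'a \<Rightarrow> real"
  assumes U: "open U" and least: "is_least_obst_sol U (\<lambda>x. \<phi>0 x + k * \<psi> ((1 / \<epsilon>) *\<^sub>R x)) u"
    and k: "k > 0" and \<epsilon>: "\<epsilon> > 0"
    and \<phi>0: "C2_on U \<phi>0" and \<phi>0c: "continuous_on (closure U) \<phi>0" and \<phi>0neg: "\<forall>x\<in>frontier U. \<phi>0 x < 0"
    and lam: "lam > 0" and lap: "\<forall>x\<in>U. - laplacian \<phi>0 x \<le> 1 / lam"
    and chi: "cell_admissible \<mu> \<psi> chi" and \<mu>: "\<mu> = (1 / lam) * (\<epsilon>\<^sup>2 / k)"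
    and chi0: "\<forall>y. chi y \<le> 0"
  defines "V \<equiv> (\<lambda>y. if \<epsilon> *\<^sub>R y \<in> U then min ((u (\<epsilon> *\<^sub>R y) - \<phi>0 (\<epsilon> *\<^sub>R y)) / k) (chi y) else chi y)"
  shows "\<forall>y. continuous (at y) V" and "visc_lap_le UNIV \<mu> V" and "\<forall>y. \<psi> y \<le> V y" and "\<forall>y. V y \<le> chi y"
proof -
  define W where "W = (\<lambda>y. (u (\<epsilon> *\<^sub>R y) - \<phi>0 (\<epsilon> *\<^sub>R y)) / k)"
  have Vdef: "V y = (if \<epsilon> *\<^sub>R y \<in> U then min (W y) (chi y) else chi y)" for y
    unfolding V_def W_def by simp
  have adm: "obst_admissible U (\<lambda>x. \<phi>0 x + k * \<psi> ((1 / \<epsilon>) *\<^sub>R x)) u"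
    using least unfolding is_least_obst_sol_def by auto
  have uc: "continuous_on (closure U) u" and uvisc: "visc_lap_le U 0 u"
    and uob: "\<forall>x\<in>U. \<phi>0 x + k * \<psi> ((1 / \<epsilon>) *\<^sub>R x) \<le> u x" and ufr: "\<forall>x\<in>frontier U. 0 \<le> u x"
    using adm unfolding obst_admissible_def by auto
  have chic: "continuous_on UNIV chi" and chivisc: "visc_lap_le UNIV \<mu> chi" and chipsi: "\<forall>x. \<psi> x \<le> chi x"
    using chi unfolding cell_admissible_def by auto
  have Vle: "\<And>y. V y \<le> chi y" unfolding Vdef by auto
  then show "\<forall>y. V y \<le> chi y" by blast
  have Wpsi: "W y \<ge> \<psi> y" if "\<epsilon> *\<^sub>R y \<in> U" for y
  proof -
    have "\<phi>0 (\<epsilon> *\<^sub>R y) + k * \<psi> y \<le> u (\<epsilon> *\<^sub>R y)" using uob that \<epsilon> by force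
    then have "k * \<psi> y \<le> u (\<epsilon> *\<^sub>R y) - \<phi>0 (\<epsilon> *\<^sub>R y)" by simp
    then show ?thesis unfolding W_def using k by (simp add: le_divide_eq mult.commute)
  qed
  show "\<forall>y. \<psi> y \<le> V y" unfolding Vdef using Wpsi chipsi by auto
  have struct: "(\<exists>e1>0. \<forall>y\<in>ball y1 e1. V y = chi y) \<or> (\<exists>e1>0. \<forall>y\<in>ball y1 e1. \<epsilon> *\<^sub>R y \<in> U)" for y1
  proof (cases "\<epsilon> *\<^sub>R y1 \<in> U")
    case True
    obtain d where d: "d > 0" "ball (\<epsilon> *\<^sub>R y1) d \<subseteq> U" using U True open_contains_ball by blast
    have "\<forall>y\<in>ball y1 (d / \<epsilon>). \<epsilon> *\<^sub>R y \<in> U"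
    proof
      fix y assume "y \<in> ball y1 (d / \<epsilon>)"
      then have "dist y1 y * \<epsilon> < d" using \<epsilon> by (simp add: less_divide_eq)
      then have "dist (\<epsilon> *\<^sub>R y1) (\<epsilon> *\<^sub>R y) < d" using \<epsilon>
        by (simp add: dist_norm scaleR_diff_right[symmetric] mult.commute)
      then show "\<epsilon> *\<^sub>R y \<in> U" using d by auto
    qed
    then show ?thesis using d \<epsilon> by (meson divide_pos_pos)
  next
    case False
    show ?thesis
    proof (cases "\<epsilon> *\<^sub>R y1 \<in> closure U")
      case True
      then have fr: "\<epsilon> *\<^sub>R y1 \<in> frontier U" using False U by (simp add: frontier_def interior_open)
      have pos: "u (\<epsilon> *\<^sub>R y1) - \<phi>0 (\<epsilon> *\<^sub>R y1) > 0" using ufr \<phi>0neg fr by force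
      have "continuous (at (\<epsilon> *\<^sub>R y1) within closure U) (\<lambda>x. u x - \<phi>0 x)"
        using continuous_on_diff[OF uc \<phi>0c] True continuous_on_eq_continuous_within by blast
      then obtain d where d: "d > 0" "\<And>x. x \<in> closure U \<Longrightarrow> dist x (\<epsilon> *\<^sub>R y1) < d \<Longrightarrow>
          dist (u x - \<phi>0 x) (u (\<epsilon> *\<^sub>R y1) - \<phi>0 (\<epsilon> *\<^sub>R y1)) < u (\<epsilon> *\<^sub>R y1) - \<phi>0 (\<epsilon> *\<^sub>R y1)"
        unfolding continuous_within_eps_delta using pos by blast
      have "\<forall>y\<in>ball y1 (d / \<epsilon>). V y = chi y"
      proof
        fix y assume "y \<in> ball y1 (d / \<epsilon>)"
        then have "dist y1 y * \<epsilon> < d" using \<epsilon> by (simp add: less_divide_eq)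
        then have dd: "dist (\<epsilon> *\<^sub>R y) (\<epsilon> *\<^sub>R y1) < d" using \<epsilon>
          by (simp add: dist_norm scaleR_diff_right[symmetric] mult.commute norm_minus_commute)
        show "V y = chi y"
        proof (cases "\<epsilon> *\<^sub>R y \<in> U")
          case yU: True
          have "dist (u (\<epsilon> *\<^sub>R y) - \<phi>0 (\<epsilon> *\<^sub>R y)) (u (\<epsilon> *\<^sub>R y1) - \<phi>0 (\<epsilon> *\<^sub>R y1)) < u (\<epsilon> *\<^sub>R y1) - \<phi>0 (\<epsilon> *\<^sub>R y1)"
            using d(2)[OF _ dd] yU closure_subset by blast
          then have "u (\<epsilon> *\<^sub>R y) - \<phi>0 (\<epsilon> *\<^sub>R y) > 0" unfolding dist_real_def abs_less_iff by linarith
          then have "W y > 0" unfolding W_def using k by simp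
          then show ?thesis unfolding Vdef using yU chi0[rule_format, of y] by simp
        next
          case False then show ?thesis unfolding Vdef by simp
        qed
      qed
      then show ?thesis using d \<epsilon> by (meson divide_pos_pos)
    next
      case False
      obtain d where d: "d > 0" "ball (\<epsilon> *\<^sub>R y1) d \<subseteq> - closure U"
        using False open_contains_ball[of "- closure U"] by blast
      have "\<forall>y\<in>ball y1 (d / \<epsilon>). V y = chi y"
      proof
        fix y assume "y \<in> ball y1 (d / \<epsilon>)"
        then have "dist y1 y * \<epsilon> < d" using \<epsilon> by (simp add: less_divide_eq)
        then have "dist (\<epsilon> *\<^sub>R y1) (\<epsilon> *\<^sub>R y) < d" using \<epsilon>
          by (simp add: dist_norm scaleR_diff_right[symmetric] mult.commute)
        then have "\<epsilon> *\<^sub>R y \<in> - closure U" using d by auto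
        then have "\<epsilon> *\<^sub>R y \<notin> U" using closure_subset[of U] by blast
        then show "V y = chi y" unfolding Vdef by simp
      qed
      then show ?thesis using d \<epsilon> by (meson divide_pos_pos)
    qed
  qed
  have Wcont: "continuous (at y) W" if "\<epsilon> *\<^sub>R y \<in> U" for y
  proof -
    have ucU: "continuous_on U u" using uc closure_subset continuous_on_subset by blast
    have \<phi>0cU: "continuous_on U \<phi>0" using \<phi>0c closure_subset continuous_on_subset by blast
    have "isCont u (\<epsilon> *\<^sub>R y)" "isCont \<phi>0 (\<epsilon> *\<^sub>R y)"
      using ucU \<phi>0cU continuous_on_eq_continuous_at[OF U] that by blast+
    then have "continuous (at (\<epsilon> *\<^sub>R y)) (\<lambda>x. (u x - \<phi>0 x) / k)"
      using k by (intro continuous_intros) auto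
    then show ?thesis unfolding W_def
      by (rule isCont_o2[rotated]) (auto intro!: continuous_intros)
  qed
  show "\<forall>y. continuous (at y) V"
  proof
    fix y1
    have chiat: "continuous (at y) chi" for y using chic by (simp add: continuous_on_eq_continuous_at)
    from struct[of y1] show "continuous (at y1) V"
    proof
      assume "\<exists>e1>0. \<forall>y\<in>ball y1 e1. V y = chi y"
      then obtain e1 where e1: "e1 > 0" "\<forall>y\<in>ball y1 e1. V y = chi y" by blast
      show ?thesis
        by (rule continuous_transform_within[OF chiat[of y1] e1(1), where g=V, simplified])
           (use e1 in \<open>auto simp: dist_commute\<close>)
    next
      assume "\<exists>e1>0. \<forall>y\<in>ball y1 e1. \<epsilon> *\<^sub>R y \<in> U"
      then obtain e1 where e1: "e1 > 0" "\<forall>y\<in>ball y1 e1. \<epsilon> *\<^sub>R y \<in> U" by blast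
      have "continuous (at y1) (\<lambda>y. min (W y) (chi y))"
        using Wcont e1 chiat by (intro continuous_min) auto
      then show ?thesis
        by (rule continuous_transform_within[OF _ e1(1), where g=V, simplified])
           (use e1 in \<open>auto simp: dist_commute Vdef\<close>)
    qed
  qed
  show "visc_lap_le UNIV \<mu> V"
    unfolding visc_lap_le_def
  proof (intro ballI allI impI)
    fix y1 :: 'a and \<phi> :: "'a \<Rightarrow> real" and e :: real
    assume e: "e > 0" and C2: "C2_on (ball y1 e) \<phi>" and eq: "\<phi> y1 = V y1" and below: "\<forall>y\<in>ball y1 e. \<phi> y \<le> V y"
    have viachi: "laplacian \<phi> y1 \<le> \<mu>" if "\<phi> y1 = chi y1" "\<forall>y\<in>ball y1 e. \<phi> y \<le> chi y"
      using chivisc e C2 that unfolding visc_lap_le_def by blast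
    show "laplacian \<phi> y1 \<le> \<mu>"
    proof (cases "V y1 = chi y1")
      case True
      then show ?thesis using viachi eq below Vle order_trans by metis
    next
      case False
      then have y1U: "\<epsilon> *\<^sub>R y1 \<in> U" and VW: "V y1 = W y1" unfolding Vdef by (auto split: if_splits simp: min_def)
      obtain d where d: "d > 0" "ball (\<epsilon> *\<^sub>R y1) d \<subseteq> U" using U y1U open_contains_ball by blast
      define e2 where "e2 = min e (d / \<epsilon>)"
      have e2: "e2 > 0" unfolding e2_def using e d \<epsilon> by simp
      define B where "B = ball (\<epsilon> *\<^sub>R y1) (\<epsilon> * e2)"
      have Bin: "(1 / \<epsilon>) *\<^sub>R x \<in> ball y1 e2" if "x \<in> B" for x
      proof -
        have "dist (\<epsilon> *\<^sub>R y1) x < \<epsilon> * e2" using that unfolding B_def by simp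
        moreover have "dist (\<epsilon> *\<^sub>R y1) x = \<epsilon> * dist y1 ((1 / \<epsilon>) *\<^sub>R x)"
        proof -
          have "\<epsilon> *\<^sub>R y1 - x = \<epsilon> *\<^sub>R (y1 - (1 / \<epsilon>) *\<^sub>R x)" using \<epsilon> by (simp add: scaleR_diff_right)
          then show ?thesis using \<epsilon> by (simp add: dist_norm)
        qed
        ultimately show ?thesis using \<epsilon> by simp
      qed
      have BU: "B \<subseteq> U"
      proof -
        have "\<epsilon> * e2 \<le> d" unfolding e2_def using \<epsilon> by (simp add: min_def) (smt (verit) \<epsilon> mult.commute pos_le_divide_eq)
        then show ?thesis using d unfolding B_def by auto
      qed
      have sub_e2: "ball y1 e2 \<subseteq> ball y1 e" unfolding e2_def by auto
      define \<phi>s where "\<phi>s = (\<lambda>x. k * \<phi> ((1 / \<epsilon>) *\<^sub>R x + 0))"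
      have C2s: "C2_on {x. (1 / \<epsilon>) *\<^sub>R x + 0 \<in> ball y1 e} \<phi>s"
        unfolding \<phi>s_def by (rule C2_affine(1)[OF open_ball C2]) (use \<epsilon> in simp)
      have BS: "B \<subseteq> {x. (1 / \<epsilon>) *\<^sub>R x + 0 \<in> ball y1 e}"
      proof
        fix x assume "x \<in> B"
        then have "(1 / \<epsilon>) *\<^sub>R x \<in> ball y1 e" using Bin sub_e2 by blast
        then show "x \<in> {x. (1 / \<epsilon>) *\<^sub>R x + 0 \<in> ball y1 e}" by simp
      qed
      define \<Phi> where "\<Phi> = (\<lambda>x. \<phi>0 x + \<phi>s x)"
      have C2\<Phi>: "C2_on B \<Phi>" unfolding \<Phi>_def
        by (rule C2_add(1)[OF _ C2_on_subset[OF \<phi>0 BU] C2_on_subset[OF C2s BS]]) (simp add: B_def)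
      have y1B: "\<epsilon> *\<^sub>R y1 \<in> B" unfolding B_def using \<epsilon> e2 by simp
      have Bball: "B = ball (\<epsilon> *\<^sub>R y1) (\<epsilon> * e2)" unfolding B_def ..
      have \<Phi>eq: "\<Phi> (\<epsilon> *\<^sub>R y1) = u (\<epsilon> *\<^sub>R y1)"
        unfolding \<Phi>_def \<phi>s_def using eq VW \<epsilon> k unfolding W_def by simp
      have \<Phi>le: "\<forall>x\<in>B. \<Phi> x \<le> u x"
      proof
        fix x assume x: "x \<in> B"
        let ?y = "(1 / \<epsilon>) *\<^sub>R x"
        have yb: "?y \<in> ball y1 e" using Bin[OF x] sub_e2 by blast
        have eyy: "\<epsilon> *\<^sub>R ?y = x" using \<epsilon> by simp
        have xU: "\<epsilon> *\<^sub>R ?y \<in> U" using eyy x BU by auto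
        have "\<phi> ?y \<le> V ?y" using below yb by blast
        also have "\<dots> \<le> W ?y" unfolding Vdef using xU by simp
        finally have "\<phi> ?y \<le> (u x - \<phi>0 x) / k" unfolding W_def eyy .
        then have "k * \<phi> ?y \<le> u x - \<phi>0 x" using k by (simp add: le_divide_eq mult.commute)
        then show "\<Phi> x \<le> u x" unfolding \<Phi>_def \<phi>s_def by simp
      qed
      have "laplacian \<Phi> (\<epsilon> *\<^sub>R y1) \<le> 0"
      proof -
        have "\<epsilon> * e2 > 0" using \<epsilon> e2 by simp
        then show ?thesis
          using uvisc y1U C2\<Phi> \<Phi>eq \<Phi>le unfolding visc_lap_le_def Bball by blast
      qed
      moreover have "laplacian \<Phi> (\<epsilon> *\<^sub>R y1) = laplacian \<phi>0 (\<epsilon> *\<^sub>R y1) + k * (1 / \<epsilon>)\<^sup>2 * laplacian \<phi> y1"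
      proof -
        have "laplacian \<Phi> (\<epsilon> *\<^sub>R y1) = laplacian \<phi>0 (\<epsilon> *\<^sub>R y1) + laplacian \<phi>s (\<epsilon> *\<^sub>R y1)"
          unfolding \<Phi>_def
          by (rule laplacian_add[OF _ C2_on_subset[OF \<phi>0 BU] C2_on_subset[OF C2s BS] y1B]) (simp add: B_def)
        moreover have "laplacian \<phi>s (\<epsilon> *\<^sub>R y1) = k * (1 / \<epsilon>)\<^sup>2 * laplacian \<phi> ((1 / \<epsilon>) *\<^sub>R (\<epsilon> *\<^sub>R y1) + 0)"
          unfolding \<phi>s_def by (rule laplacian_affine[OF open_ball C2]) (use \<epsilon> e in simp_all)
        ultimately show ?thesis using \<epsilon> by simp
      qed
      ultimately have "k * (1 / \<epsilon>)\<^sup>2 * laplacian \<phi> y1 \<le> - laplacian \<phi>0 (\<epsilon> *\<^sub>R y1)" by simp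
      also have "\<dots> \<le> 1 / lam" using lap y1U by blast
      finally have "k / \<epsilon>\<^sup>2 * laplacian \<phi> y1 \<le> 1 / lam" by (simp add: power_divide)
      then have "(k / \<epsilon>\<^sup>2 * laplacian \<phi> y1) * (\<epsilon>\<^sup>2 / k) \<le> (1 / lam) * (\<epsilon>\<^sup>2 / k)"
        by (rule mult_right_mono) (use k in simp)
      moreover have "(k / \<epsilon>\<^sup>2 * laplacian \<phi> y1) * (\<epsilon>\<^sup>2 / k) = laplacian \<phi> y1"
        using k \<epsilon> by (simp add: field_simps)
      ultimately show ?thesis unfolding \<mu> by simp
    qed
  qed
qed



lemma chi_lower:
  fixes U :: "'a::euclidean_space set" and u \<phi>0 \<psi> chi :: "'a \<Rightarrow> real"
  assumes U: "open U" and Ub: "bounded U" and least: "is_least_obst_sol U (\<lambda>x. \<phi>0 x + k * \<psi> ((1 / \<epsilon>) *\<^sub>R x)) u"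
    and k: "k > 0" and \<epsilon>: "\<epsilon> > 0"
    and \<phi>0: "C2_on U \<phi>0" and \<phi>0c: "continuous_on (closure U) \<phi>0" and \<phi>0neg: "\<forall>x\<in>frontier U. \<phi>0 x < 0"
    and lam: "lam > 0" and lap: "\<forall>x\<in>U. - laplacian \<phi>0 x \<le> 1 / lam"
    and chi: "is_least_cell_sol \<mu> \<psi> chi" and \<mu>: "\<mu> = (1 / lam) * (\<epsilon>\<^sup>2 / k)"
    and chi0: "\<forall>y. chi y \<le> 0" and psi_per: "lattice_periodic \<psi>" and psi1: "\<forall>x. -1 \<le> \<psi> x"
  shows "\<forall>x\<in>U. k * chi ((1 / \<epsilon>) *\<^sub>R x) \<le> u x - \<phi>0 x"
proof -
  have chiadm: "cell_admissible \<mu> \<psi> chi" and chileast: "\<And>v. cell_admissible \<mu> \<psi> v \<Longrightarrow> \<forall>x. chi x \<le> v x"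
    using chi unfolding is_least_cell_sol_def by auto
  have chiper: "lattice_periodic chi" using chiadm unfolding cell_admissible_def by auto
  define V where "V \<equiv> (\<lambda>y. if \<epsilon> *\<^sub>R y \<in> U then min ((u (\<epsilon> *\<^sub>R y) - \<phi>0 (\<epsilon> *\<^sub>R y)) / k) (chi y) else chi y)"
  note VP = V_props[OF U least k \<epsilon> \<phi>0 \<phi>0c \<phi>0neg lam lap chiadm \<mu> chi0, folded V_def]
  have Vc: "\<And>y. continuous (at y) V" and Vvisc: "visc_lap_le UNIV \<mu> V" and Vpsi: "\<And>y. \<psi> y \<le> V y"
    and Vle: "\<And>y. V y \<le> chi y" using VP unfolding V_def by auto
  define P where "P y = Inf ((\<lambda>k. V (y + k)) ` Lat)" for y
  have Vbdd: "bdd_below ((\<lambda>k. V (y + k)) ` Lat)" for y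
  proof (rule bdd_belowI[of _ "-1"])
    fix t assume "t \<in> (\<lambda>k. V (y + k)) ` Lat"
    then obtain k where "t = V (y + k)" by blast
    then show "-1 \<le> t" using Vpsi[of "y + k"] psi1 by (metis order_trans)
  qed
  have Ple: "P y \<le> V (y + k)" if "k \<in> Lat" for y k
    unfolding P_def using that Vbdd by (simp add: cInf_lower)
  have Ppsi: "\<psi> y \<le> P y" for y
    unfolding P_def
  proof (rule cInf_greatest)
    show "(\<lambda>k. V (y + k)) ` Lat \<noteq> {}" using Lat_0 by blast
    fix t assume "t \<in> (\<lambda>k. V (y + k)) ` Lat"
    then obtain k where kk: "k \<in> Lat" "t = V (y + k)" by blast
    then show "\<psi> y \<le> t" using Vpsi[of "y + k"] periodic_Lat[OF psi_per kk(1)] by simp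
  qed
  have Pper: "lattice_periodic P"
    unfolding lattice_periodic_def
  proof (intro allI impI)
    fix x k' :: 'a assume "\<forall>b\<in>Basis. k' \<bullet> b \<in> \<int>"
    then have k': "k' \<in> Lat" unfolding Lat_def by simp
    show "P (x + k') = P x" unfolding P_def using Lat_image_shift[OF k', of V x] by simp
  qed
  obtain B1 where B1: "\<And>x. x \<in> U \<Longrightarrow> norm x \<le> B1" using Ub unfolding bounded_iff by blast
  define B where "B = max B1 0"
  have B: "\<And>x. x \<in> U \<Longrightarrow> norm x \<le> B" and Bnn: "B \<ge> 0" unfolding B_def using B1 by force+
  have local: "\<exists>K. finite K \<and> 0 \<in> K \<and> K \<subseteq> Lat \<and> (\<forall>y\<in>ball y0 1. P y = Min ((\<lambda>k. V (y + k)) ` K))" for y0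
  proof -
    define R where "R = B / \<epsilon> + norm y0 + 1"
    define K where "K = {k::'a. k \<in> Lat \<and> norm k \<le> R}"
    have Kf: "finite K" unfolding K_def by (rule Lat_bounded_finite)
    have R0: "R \<ge> 0"
      unfolding R_def using \<epsilon> Bnn by simp
    have K0: "0 \<in> K" unfolding K_def using Lat_0 R0 by simp
    have KL: "K \<subseteq> Lat" unfolding K_def by blast
    have outside: "V (y + j) = chi y" if y: "y \<in> ball y0 1" and jL: "j \<in> Lat" and jK: "j \<notin> K" for y j :: 'a
    proof -
      have nk: "norm j > R" using jK jL unfolding K_def by simp
      have ny: "norm y < norm y0 + 1"
        using y norm_triangle_ineq[of y0 "y - y0"] by (simp add: dist_norm norm_minus_commute)
      have "norm (y + j) \<ge> norm j - norm y" using norm_triangle_ineq2[of j "- y"] by (simp add: add.commute)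
      then have "norm (y + j) > B / \<epsilon>" using nk ny unfolding R_def by linarith
      then have "\<epsilon> * norm (y + j) > B" using \<epsilon> by (simp add: divide_less_eq mult.commute)
      then have "norm (\<epsilon> *\<^sub>R (y + j)) > B" using \<epsilon> by simp
      then have "\<epsilon> *\<^sub>R (y + j) \<notin> U" using B by force
      then show ?thesis unfolding V_def using periodic_Lat[OF chiper jL] by simp
    qed
    have "P y = Min ((\<lambda>k. V (y + k)) ` K)" if y: "y \<in> ball y0 1" for y
    proof (rule antisym)
      have "Min ((\<lambda>k. V (y + k)) ` K) \<in> (\<lambda>k. V (y + k)) ` K"
        using Kf K0 by (intro Min_in) auto
      then obtain k where "k \<in> K" "Min ((\<lambda>k. V (y + k)) ` K) = V (y + k)" by auto
      then show "P y \<le> Min ((\<lambda>k. V (y + k)) ` K)" using Ple KL by auto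
      show "Min ((\<lambda>k. V (y + k)) ` K) \<le> P y"
        unfolding P_def
      proof (rule cInf_greatest)
        show "(\<lambda>k. V (y + k)) ` Lat \<noteq> {}" using Lat_0 by blast
        fix t assume "t \<in> (\<lambda>k. V (y + k)) ` Lat"
        then obtain k where kk: "k \<in> Lat" "t = V (y + k)" by blast
        show "Min ((\<lambda>k. V (y + k)) ` K) \<le> t"
        proof (cases "k \<in> K")
          case True
          then show ?thesis using kk Kf by simp
        next
          case False
          have "V (y + 0) \<in> (\<lambda>k. V (y + k)) ` K" using K0 by (rule imageI)
          then have "Min ((\<lambda>k. V (y + k)) ` K) \<le> V (y + 0)" using Kf by (intro Min_le) auto
          also have "\<dots> \<le> chi y" using Vle by simp
          also have "\<dots> = t" using outside[OF y kk(1) False] kk by simp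
          finally show ?thesis .
        qed
      qed
    qed
    then show ?thesis using Kf K0 KL by blast
  qed
  have Pc: "continuous (at y0) P" for y0
  proof -
    obtain K where K: "finite K" "0 \<in> K" "K \<subseteq> Lat" "\<forall>y\<in>ball y0 1. P y = Min ((\<lambda>k. V (y + k)) ` K)"
      using local by blast
    have "continuous (at y0) (\<lambda>y. Min ((\<lambda>k. V (y + k)) ` K))"
    proof (rule continuous_Min_image[where f="\<lambda>k y. V (y + k)"])
      show "finite K" "K \<noteq> {}" using K by auto
      fix k assume "k \<in> K"
      show "continuous (at y0) (\<lambda>y. V (y + k))"
        by (rule isCont_o2[OF _ Vc]) (auto intro!: continuous_intros)
    qed
    then show ?thesis
      by (rule continuous_transform_within[where \<delta>=1 and s=UNIV, simplified])
         (use K in \<open>auto simp: dist_commute\<close>)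
  qed
  have Pvisc: "visc_lap_le UNIV \<mu> P"
    unfolding visc_lap_le_def
  proof (intro ballI allI impI)
    fix y0 :: 'a and \<phi> :: "'a \<Rightarrow> real" and e :: real
    assume e: "e > 0" and C2: "C2_on (ball y0 e) \<phi>" and eq: "\<phi> y0 = P y0" and below: "\<forall>y\<in>ball y0 e. \<phi> y \<le> P y"
    obtain K where K: "finite K" "0 \<in> K" "K \<subseteq> Lat" "\<forall>y\<in>ball y0 1. P y = Min ((\<lambda>k. V (y + k)) ` K)"
      using local by blast
    have "Min ((\<lambda>k. V (y0 + k)) ` K) \<in> (\<lambda>k. V (y0 + k)) ` K"
      using K by (intro Min_in) auto
    then obtain k0 where k0: "k0 \<in> K" "Min ((\<lambda>k. V (y0 + k)) ` K) = V (y0 + k0)" by auto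
    have Py0: "P y0 = V (y0 + k0)" using K(4) k0 by simp
    have k0L: "k0 \<in> Lat" using k0 K by blast
    define e' where "e' = min e 1"
    have e': "e' > 0" unfolding e'_def using e by simp
    define \<phi>t where "\<phi>t = (\<lambda>x. 1 * \<phi> (1 *\<^sub>R x + (- k0)))"
    have C2t: "C2_on {x. 1 *\<^sub>R x + (- k0) \<in> ball y0 e} \<phi>t"
      unfolding \<phi>t_def by (rule C2_affine(1)[OF open_ball C2]) simp
    have sub: "ball (y0 + k0) e' \<subseteq> {x. 1 *\<^sub>R x + (- k0) \<in> ball y0 e}"
    proof
      fix x assume "x \<in> ball (y0 + k0) e'"
      then have "dist y0 (x - k0) < e'" by (simp add: dist_norm algebra_simps)
      then show "x \<in> {x. 1 *\<^sub>R x + (- k0) \<in> ball y0 e}" unfolding e'_def by simp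
    qed
    have "laplacian \<phi>t (y0 + k0) \<le> \<mu>"
    proof -
      have "C2_on (ball (y0 + k0) e') \<phi>t" using C2_on_subset[OF C2t sub] .
      moreover have "\<phi>t (y0 + k0) = V (y0 + k0)" unfolding \<phi>t_def using eq Py0 by simp
      moreover have "\<forall>x\<in>ball (y0 + k0) e'. \<phi>t x \<le> V x"
      proof
        fix x assume x: "x \<in> ball (y0 + k0) e'"
        then have d: "dist y0 (x - k0) < e'" by (simp add: dist_norm algebra_simps)
        then have "\<phi> (x - k0) \<le> P (x - k0)" using below unfolding e'_def by simp
        also have "\<dots> \<le> V (x - k0 + k0)" by (rule Ple[OF k0L])
        finally show "\<phi>t x \<le> V x" unfolding \<phi>t_def by simp
      qed
      ultimately show ?thesis using Vvisc e' unfolding visc_lap_le_def by blast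
    qed
    moreover have "laplacian \<phi>t (y0 + k0) = 1 * 1\<^sup>2 * laplacian \<phi> (1 *\<^sub>R (y0 + k0) + (- k0))"
      unfolding \<phi>t_def by (rule laplacian_affine[OF open_ball C2]) (use e in simp_all)
    ultimately show "laplacian \<phi> y0 \<le> \<mu>" by simp
  qed
  have "cell_admissible \<mu> \<psi> P"
    unfolding cell_admissible_def
    using Pc Pper Pvisc Ppsi by (auto intro: continuous_at_imp_continuous_on)
  then have chiP: "\<And>y. chi y \<le> P y" using chileast by blast
  show ?thesis
  proof
    fix x assume x: "x \<in> U"
    define y0 where "y0 = (1 / \<epsilon>) *\<^sub>R x"
    have ey: "\<epsilon> *\<^sub>R y0 = x" unfolding y0_def using \<epsilon> by simp
    have "chi y0 \<le> V y0" using chiP[of y0] Ple[OF Lat_0, of y0] by simp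
    then have "chi y0 \<le> (u x - \<phi>0 x) / k" unfolding V_def ey using x by (simp add: ey)
    then show "k * chi ((1 / \<epsilon>) *\<^sub>R x) \<le> u x - \<phi>0 x" unfolding y0_def[symmetric]
      using k by (simp add: le_divide_eq mult.commute)
  qed
qed



lemma const0_visc: "\<mu> \<ge> 0 \<Longrightarrow> visc_lap_le S \<mu> (\<lambda>x::'a::euclidean_space. 0::real)"
  unfolding visc_lap_le_def
proof (intro ballI allI impI)
  fix x :: 'a and \<phi> :: "'a \<Rightarrow> real" and e :: real
  assume "\<mu> \<ge> 0" "e > 0" "C2_on (ball x e) \<phi>" "\<phi> x = 0" "\<forall>y\<in>ball x e. \<phi> y \<le> 0"
  then have "laplacian \<phi> x \<le> laplacian (\<lambda>x. 0::real) x"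
    by (intro laplacian_cmp[of e]) (auto simp: C2_const)
  then show "laplacian \<phi> x \<le> \<mu>" using \<open>\<mu> \<ge> 0\<close> by (simp add: laplacian_const)
qed

theorem lemma3p3:
  fixes U :: "'a::euclidean_space set"
    and \<phi>0 \<psi> u chi :: "'a \<Rightarrow> real"
    and lam p \<epsilon> r :: real
    and z :: 'a
  assumes U: "smooth_bounded_domain U"
    and phi0_C2: "C2_on U \<phi>0"
    and phi0_cont: "continuous_on (closure U) \<phi>0"
    and phi0_pos: "\<exists>x\<in>U. \<phi>0 x > 0"
    and phi0_neg: "\<forall>x\<in>frontier U. \<phi>0 x < 0"
    and lam: "0 < lam" "lam \<le> 1"
    and phi0_lap: "\<forall>x\<in>U. lam \<le> - laplacian \<phi>0 x \<and> - laplacian \<phi>0 x \<le> 1 / lam"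
    and psi_smooth: "smooth \<psi>"
    and psi_per: "lattice_periodic \<psi>"
    and psi_bnd: "\<forall>x. -1 \<le> \<psi> x \<and> \<psi> x \<le> 0"
    and eps: "\<epsilon> > 0"
    and u: "is_least_obst_sol U (\<lambda>x. \<phi>0 x + \<epsilon> powr p * \<psi> ((1 / \<epsilon>) *\<^sub>R x)) u"
    and chi: "is_least_cell_sol ((1 / lam) * \<epsilon> powr (2 - p)) \<psi> chi"
    and z: "z \<in> U"
    and dist: "let \<Lambda> = {x\<in>U. u x = \<phi>0 x + \<epsilon> powr p * \<psi> ((1 / \<epsilon>) *\<^sub>R x)};
                   rr = sqrt (\<epsilon> powr p * (- Inf (range chi)))
               in \<Lambda> = {} \<or> infdist z \<Lambda> > sqrt (2 * real DIM('a) / lam) * rr"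
    and r: "r > 0" "cball z r \<subseteq> U"
  shows "Sup ((\<lambda>x. u x - \<phi>0 x) ` ball z r)
           \<ge> lam / (2 * real DIM('a)) * r\<^sup>2 - (sqrt (\<epsilon> powr p * (- Inf (range chi))))\<^sup>2"
proof -
  define k where "k = \<epsilon> powr p"
  have k: "k > 0" unfolding k_def using eps by simp
  define \<mu> where "\<mu> = (1 / lam) * \<epsilon> powr (2 - p)"
  have \<mu>: "\<mu> = (1 / lam) * (\<epsilon>\<^sup>2 / k)"
    unfolding \<mu>_def k_def using eps by (simp add: powr_diff powr_numeral)
  have \<mu>0: "\<mu> \<ge> 0" unfolding \<mu>_def using lam by simp
  have Uo: "open U" and Ub: "bounded U" using U unfolding smooth_bounded_domain_def by auto
  have chiadm: "cell_admissible \<mu> \<psi> chi" and chileast: "\<And>v. cell_admissible \<mu> \<psi> v \<Longrightarrow> \<forall>x. chi x \<le> v x"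
    using chi unfolding is_least_cell_sol_def \<mu>_def by auto
  have chipsi: "\<And>x. \<psi> x \<le> chi x" using chiadm unfolding cell_admissible_def by auto
  have "cell_admissible \<mu> \<psi> (\<lambda>x. 0)"
    unfolding cell_admissible_def lattice_periodic_def using const0_visc[OF \<mu>0] psi_bnd by auto
  then have chi0: "\<forall>y. chi y \<le> 0" using chileast by blast
  have bdd: "bdd_below (range chi)"
    by (rule bdd_belowI2[of _ "-1"]) (use chipsi psi_bnd in \<open>metis order_trans\<close>)
  define E where "E = - Inf (range chi)"
  have E0: "E \<ge> 0" unfolding E_def using cInf_lower[OF rangeI bdd, of 0] chi0[rule_format, of 0] by linarith
  define R2 where "R2 = k * E"
  have R2: "R2 \<ge> 0" unfolding R2_def using k E0 by simp
  have u': "is_least_obst_sol U (\<lambda>x. \<phi>0 x + k * \<psi> ((1 / \<epsilon>) *\<^sub>R x)) u" using u unfolding k_def .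
  have lap1: "\<forall>x\<in>U. - laplacian \<phi>0 x \<le> 1 / lam" using phi0_lap by blast
  have lowchi: "\<forall>x\<in>U. k * chi ((1 / \<epsilon>) *\<^sub>R x) \<le> u x - \<phi>0 x"
    by (rule chi_lower[OF Uo Ub u' k eps phi0_C2 phi0_cont phi0_neg lam(1) lap1 _ \<mu> chi0 psi_per])
       (use chi psi_bnd in \<open>simp_all add: \<mu>_def\<close>)
  have lower: "\<forall>x\<in>U. u x - \<phi>0 x \<ge> - R2"
  proof
    fix x assume x: "x \<in> U"
    have "Inf (range chi) \<le> chi ((1 / \<epsilon>) *\<^sub>R x)" by (rule cInf_lower[OF rangeI bdd])
    then have "k * Inf (range chi) \<le> k * chi ((1 / \<epsilon>) *\<^sub>R x)" using k by simp
    then show "u x - \<phi>0 x \<ge> - R2" using lowchi x unfolding R2_def E_def by force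
  qed
  have psic: "continuous_on UNIV \<psi>"
  proof -
    have "\<psi> differentiable at x" for x
      using psi_smooth unfolding smooth_def by (metis empty_subsetI iter_partial.simps(1) set_empty)
    then show ?thesis by (meson continuous_at_imp_continuous_on differentiable_imp_continuous_within)
  qed
  have obst_c: "continuous_on U (\<lambda>x. \<phi>0 x + k * \<psi> ((1 / \<epsilon>) *\<^sub>R x))"
    using C2_imp_cont[OF phi0_C2 Uo]
    by (intro continuous_intros continuous_on_compose2[OF psic]) auto
  have lap2: "\<forall>y\<in>U. laplacian \<phi>0 y \<le> - lam" using phi0_lap by force
  have obst_le: "\<forall>x\<in>U. \<phi>0 x + k * \<psi> ((1 / \<epsilon>) *\<^sub>R x) \<le> \<phi>0 x"
    using psi_bnd k by (simp add: mult_nonneg_nonpos)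
  define \<Lambda> where "\<Lambda> = {x\<in>U. u x = \<phi>0 x + k * \<psi> ((1 / \<epsilon>) *\<^sub>R x)}"
  have n: "real DIM('a) \<ge> 1" by simp
  have dst: "\<Lambda> = {} \<or> lam / (2 * real DIM('a)) * (infdist z \<Lambda>)\<^sup>2 > R2"
  proof -
    have "\<Lambda> = {} \<or> infdist z \<Lambda> > sqrt (2 * real DIM('a) / lam) * sqrt R2"
      using dist unfolding Let_def \<Lambda>_def R2_def E_def k_def by simp
    moreover have "infdist z \<Lambda> > sqrt (2 * real DIM('a) / lam) * sqrt R2 \<Longrightarrow> lam / (2 * real DIM('a)) * (infdist z \<Lambda>)\<^sup>2 > R2"
    proof -
      assume h: "infdist z \<Lambda> > sqrt (2 * real DIM('a) / lam) * sqrt R2"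
      have s0: "sqrt (2 * real DIM('a) / lam) * sqrt R2 \<ge> 0" using lam R2 by simp
      have "(sqrt (2 * real DIM('a) / lam) * sqrt R2)\<^sup>2 < (infdist z \<Lambda>)\<^sup>2"
        using h s0 by (simp add: power_strict_mono)
      moreover have "(sqrt (2 * real DIM('a) / lam) * sqrt R2)\<^sup>2 = 2 * real DIM('a) / lam * R2"
        using lam R2 by (simp add: power_mult_distrib)
      ultimately have "2 * real DIM('a) / lam * R2 < (infdist z \<Lambda>)\<^sup>2" by simp
      then have "lam / (2 * real DIM('a)) * (2 * real DIM('a) / lam * R2) < lam / (2 * real DIM('a)) * (infdist z \<Lambda>)\<^sup>2"
        using lam n by (intro mult_strict_left_mono) auto
      then show ?thesis using lam n by simp
    qed
    ultimately show ?thesis by blast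
  qed
  have "Sup ((\<lambda>x. u x - \<phi>0 x) ` ball z r) \<ge> lam / (2 * real DIM('a)) * r\<^sup>2 - R2"
    by (rule main_step[OF Uo u' obst_c phi0_C2 lam(1) lap2 obst_le lower R2 dst[unfolded \<Lambda>_def] z r])
  moreover have "(sqrt (\<epsilon> powr p * (- Inf (range chi))))\<^sup>2 = R2"
    unfolding R2_def E_def k_def using R2 unfolding R2_def E_def k_def by simp
  ultimately show ?thesis by simp
qed


end
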